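(* Let $\mathcal{T}=(\mathcal{V},\mathcal{E})$ obey the LC-PF model and covariance assumption of the context, with $\Omega_p(c,c)+\Omega_q(c,c)>0$ for every non-root node $c$. Suppose $\mathcal{T}$ has a set $\mathcal{M}$ of $k$ pairwise non-adjacent missing non-root nodes, each of degree exactly $2$ in $\mathcal{T}$. Let $\mathcal{O}=\mathcal{V}\setminus\mathcal{M}$, and let $\mathcal{T}_{\mathcal{M}}$ be the minimum weight spanning tree of the complete graph on $\mathcal{O}$ with edge weights $\phi_{ab}$. Then $\mathcal{T}_{\mathcal{M}}$ is a tree on $|\mathcal{V}|-k$ nodes that contains exactly $k$ edges not present in $\mathcal{T}$, and exactly $2k$ edges of $\mathcal{T}$ are not edges of $\mathcal{T}_{\mathcal{M}}$.
   Context: $\mathcal{T}=(\mathcal{V},\mathcal{E})$ is a tree with a distinguished root (substation) of degree one. Each edge $(ab)$ has resistance $r_{ab}>0$ and reactance $x_{ab}>0$. Let $H_{1/r},H_{1/x}$ be the weighted Laplacians with edge weights $1/r_{ab}$, $1/x_{ab}$, with the root row and column removed. Non-root nodes have random injections $p_a,q_a$. The LC-PF model gives $v=H_{1/r}^{-1}p+H_{1/x}^{-1}q$ and $\theta=H_{1/x}^{-1}p-H_{1/r}^{-1}q$ at non-root nodes; the root voltage is constant. Covariance assumption: $\Omega_p,\Omega_q$ are the covariances of $p,q$, and $\Omega_{pq}=\mathbb{E}[(p-\mathbb{E}p)(q-\mathbb{E}q)^T]=\Omega_{qp}^T$. For distinct non-root $a,b$, $\Omega_p(a,b)=\Omega_q(a,b)=\Omega_{qp}(a,b)=0$,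 and $\Omega_{qp}(a,a)\ge0$. Define $\phi_{ab}=\mathbb{E}[((v_a-\mathbb{E}v_a)-(v_b-\mathbb{E}v_b))^2]$. *)

theory Defs
  imports "HOL-Probability.Probability"
begin

definition ugraph :: "'v set \<Rightarrow> 'v set set \<Rightarrow> bool" where
  "ugraph V E \<longleftrightarrow> (\<forall>e\<in>E. \<exists>a b. e = {a, b} \<and> a \<noteq> b \<and> a \<in> V \<and> b \<in> V)"

definition gconnected :: "'v set \<Rightarrow> 'v set set \<Rightarrow> bool" where
  "gconnected V E \<longleftrightarrow> (\<forall>a\<in>V. \<forall>b\<in>V. (\<lambda>x y. {x, y} \<in> E)\<^sup>*\<^sup>* a b)"

definition is_tree :: "'v set \<Rightarrow> 'v set set \<Rightarrow> bool" where
  "is_tree V E \<longleftrightarrow> finite V \<and> V \<noteq> {} \<and> ugraph V E \<and> gconnected V E \<and> card E = card V - 1"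

definition degree :: "'v set set \<Rightarrow> 'v \<Rightarrow> nat" where
  "degree E a = card {b. b \<noteq> a \<and> {a, b} \<in> E}"

text \<open>Total weight of an edge set, for a symmetric pair weight w (each edge counted once).\<close>
definition tree_weight :: "'v set \<Rightarrow> 'v set set \<Rightarrow> ('v \<Rightarrow> 'v \<Rightarrow> real) \<Rightarrow> real" where
  "tree_weight Ob T w = (\<Sum>(a, b)\<in>{(a, b). a \<in> Ob \<and> b \<in> Ob \<and> a \<noteq> b \<and> {a, b} \<in> T}. w a b) / 2"

text \<open>Minimum weight spanning tree of the complete graph on Ob (every tree on Ob is a
  spanning tree of the complete graph on Ob).\<close>
definition is_MST :: "'v set \<Rightarrow> ('v \<Rightarrow> 'v \<Rightarrow> real) \<Rightarrow> 'v set set \<Rightarrow> bool" where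
  "is_MST Ob w T \<longleftrightarrow> is_tree Ob T \<and> (\<forall>T'. is_tree Ob T' \<longrightarrow> tree_weight Ob T w \<le> tree_weight Ob T' w)"

definition laplacian :: "'v set set \<Rightarrow> ('v set \<Rightarrow> real) \<Rightarrow> 'v \<Rightarrow> 'v \<Rightarrow> real" where
  "laplacian E g a b =
     (if a = b then (\<Sum>e\<in>{e\<in>E. a \<in> e}. g e)
      else if {a, b} \<in> E then - g {a, b} else 0)"

text \<open>Inverse of the matrix H restricted to rows/columns in N (i.e. the Laplacian with the
  rt row and column removed when N = V - {rt}).\<close>
definition red_inv :: "'v set \<Rightarrow> ('v \<Rightarrow> 'v \<Rightarrow> real) \<Rightarrow> 'v \<Rightarrow> 'v \<Rightarrow> real" where
  "red_inv N H = (THE A. (\<forall>a b. A a b \<noteq> 0 \<longrightarrow> a \<in> N \<and> b \<in> N) \<and>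
       (\<forall>a\<in>N. \<forall>b\<in>N. (\<Sum>c\<in>N. H a c * A c b) = (if a = b then 1 else 0)))"

definition lcpf_v :: "'v set \<Rightarrow> 'v set set \<Rightarrow> 'v \<Rightarrow> ('v set \<Rightarrow> real) \<Rightarrow> ('v set \<Rightarrow> real)
     \<Rightarrow> real \<Rightarrow> ('v \<Rightarrow> 'w \<Rightarrow> real) \<Rightarrow> ('v \<Rightarrow> 'w \<Rightarrow> real) \<Rightarrow> 'v \<Rightarrow> 'w \<Rightarrow> real" where
  "lcpf_v V E rt r x v0 p q a \<omega> =
     (if a = rt then v0
      else (\<Sum>b\<in>V - {rt}.
              red_inv (V - {rt}) (laplacian E (\<lambda>e. 1 / r e)) a b * p b \<omega>
            + red_inv (V - {rt}) (laplacian E (\<lambda>e. 1 / x e)) a b * q b \<omega>))"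

definition cov :: "'w measure \<Rightarrow> ('w \<Rightarrow> real) \<Rightarrow> ('w \<Rightarrow> real) \<Rightarrow> real" where
  "cov M X Y = (\<integral>\<omega>. (X \<omega> - (\<integral>z. X z \<partial>M)) * (Y \<omega> - (\<integral>z. Y z \<partial>M)) \<partial>M)"

definition phi :: "'w measure \<Rightarrow> ('v \<Rightarrow> 'w \<Rightarrow> real) \<Rightarrow> 'v \<Rightarrow> 'v \<Rightarrow> real" where
  "phi M v a b = (\<integral>\<omega>. ((v a \<omega> - (\<integral>z. v a z \<partial>M)) - (v b \<omega> - (\<integral>z. v b z \<partial>M)))\<^sup>2 \<partial>M)"

end

theory Submission
  imports Defs
begin


locale ptree =
  fixes V :: "'v set" and s0 :: 'v and par :: "'v \<Rightarrow> 'v" and dep :: "'v \<Rightarrow> nat"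
  assumes finV: "finite V" and s0V: "s0 \<in> V"
    and par_in: "\<And>a. a \<in> V \<Longrightarrow> a \<noteq> s0 \<Longrightarrow> par a \<in> V"
    and dep_lt: "\<And>a. a \<in> V \<Longrightarrow> a \<noteq> s0 \<Longrightarrow> dep (par a) < dep a"
begin

definition pstep where "pstep a b \<longleftrightarrow> a \<in> V \<and> a \<noteq> s0 \<and> b = par a"
definition anc where "anc x y \<longleftrightarrow> pstep\<^sup>*\<^sup>* y x"
definition edges where "edges = (\<lambda>a. {a, par a}) ` (V - {s0})"

lemma anc_refl[simp]: "anc x x" by (simp add: anc_def)

lemma anc_step: "y \<in> V \<Longrightarrow> y \<noteq> s0 \<Longrightarrow> anc x (par y) \<Longrightarrow> anc x y"
  unfolding anc_def by (rule converse_rtranclp_into_rtranclp) (auto simp: pstep_def)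

lemma anc_cases: "anc x y \<Longrightarrow> x = y \<or> (y \<in> V \<and> y \<noteq> s0 \<and> anc x (par y))"
  unfolding anc_def by (erule converse_rtranclpE) (auto simp: pstep_def)

lemma anc_trans: "anc x y \<Longrightarrow> anc y z \<Longrightarrow> anc x z"
  unfolding anc_def by auto

lemma par_ne: "a \<in> V \<Longrightarrow> a \<noteq> s0 \<Longrightarrow> par a \<noteq> a"
  using dep_lt by fastforce

lemma anc_in: "anc x y \<Longrightarrow> y \<in> V \<Longrightarrow> x \<in> V"
  unfolding anc_def
proof (induction rule: converse_rtranclp_induct)
  case base then show ?case by simp
next
  case (step y z) then show ?case using par_in by (auto simp: pstep_def)
qed

lemma anc_dep: "anc x y \<Longrightarrow> x \<noteq> y \<Longrightarrow> dep x < dep y"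
  unfolding anc_def
proof (induction rule: converse_rtranclp_induct)
  case base then show ?case by simp
next
  case (step y z) then show ?case using dep_lt[of y]
    by (cases "z = x") (auto simp: pstep_def)
qed

lemma anc_dep_le: "anc x y \<Longrightarrow> dep x \<le> dep y"
  using anc_dep[of x y] by (cases "x = y") auto

lemma anc_antisym: "anc x y \<Longrightarrow> anc y x \<Longrightarrow> x = y"
  by (metis anc_dep anc_dep_le leD)

lemma anc_s0: "y \<in> V \<Longrightarrow> anc s0 y"
proof (induction "dep y" arbitrary: y rule: less_induct)
  case less
  show ?case
  proof (cases "y = s0")
    case False
    then show ?thesis using less par_in dep_lt anc_step by blast
  qed simp
qed

lemma anc_s0_eq: "anc x s0 \<Longrightarrow> x = s0"
  using anc_cases by blast

lemma anc_par_ne: "anc x y \<Longrightarrow> x \<noteq> y \<Longrightarrow> y \<in> V \<and> y \<noteq> s0 \<and> anc x (par y)"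
  using anc_cases by blast

lemma anc_par: "y \<in> V \<Longrightarrow> y \<noteq> s0 \<Longrightarrow> anc (par y) y"
  using anc_step anc_refl by blast

lemma anc_lin: "anc x y \<Longrightarrow> anc z y \<Longrightarrow> anc x z \<or> anc z x"
proof (induction "dep y" arbitrary: y rule: less_induct)
  case less
  show ?case
  proof (cases "x = y \<or> z = y")
    case True then show ?thesis using less by auto
  next
    case False
    then have "y \<in> V" "y \<noteq> s0" "anc x (par y)" "anc z (par y)"
      using anc_par_ne less.prems by blast+
    then show ?thesis using less dep_lt by blast
  qed
qed

lemma anc_child: "anc c w \<Longrightarrow> w \<noteq> c \<Longrightarrow> \<exists>y. y \<in> V \<and> y \<noteq> s0 \<and> par y = c \<and> anc y w"
proof (induction "dep w" arbitrary: w rule: less_induct)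
  case less
  then have w: "w \<in> V" "w \<noteq> s0" "anc c (par w)" using anc_par_ne by blast+
  show ?case
  proof (cases "par w = c")
    case True then show ?thesis using w by auto
  next
    case False
    then obtain y where "y \<in> V \<and> y \<noteq> s0 \<and> par y = c \<and> anc y (par w)"
      using less w dep_lt by blast
    then show ?thesis using w anc_step by blast
  qed
qed

lemma par_anc_ne: "a \<in> V \<Longrightarrow> a \<noteq> s0 \<Longrightarrow> \<not> anc a (par a)"
  using anc_dep_le dep_lt by fastforce

lemma edge_inj: "inj_on (\<lambda>a. {a, par a}) (V - {s0})"
proof (rule inj_onI)
  fix a b assume a: "a \<in> V - {s0}" and b: "b \<in> V - {s0}" and e: "{a, par a} = {b, par b}"
  show "a = b"
  proof (rule ccontr)
    assume "a \<noteq> b"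
    then have "a = par b" "b = par a" using e by (auto simp: doubleton_eq_iff)
    then show False using dep_lt[of a] dep_lt[of b] a b by auto
  qed
qed

lemma card_edges: "card edges = card V - 1"
  unfolding edges_def using card_image[OF edge_inj] finV s0V by (simp add: card_Diff_singleton)

lemma finite_edges: "finite edges"
  unfolding edges_def using finV by simp

lemma rtranclp_sym_set:
  assumes "(\<lambda>x y. {x, y} \<in> F)\<^sup>*\<^sup>* a b" shows "(\<lambda>x y. {x, y} \<in> F)\<^sup>*\<^sup>* b a"
  using assms
proof (induction rule: rtranclp_induct)
  case (step y z)
  then have "(\<lambda>x y. {x, y} \<in> F) z y" by (simp add: insert_commute)
  then show ?case using step by (meson converse_rtranclp_into_rtranclp)
qed simp

lemma anc_reach:
  assumes "anc x y"
    and "\<And>a. anc x a \<Longrightarrow> anc a y \<Longrightarrow> a \<noteq> x \<Longrightarrow> {a, par a} \<in> F"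
  shows "(\<lambda>x y. {x, y} \<in> F)\<^sup>*\<^sup>* y x"
  using assms
proof (induction "dep y" arbitrary: y rule: less_induct)
  case less
  show ?case
  proof (cases "x = y")
    case False
    then have y: "y \<in> V" "y \<noteq> s0" "anc x (par y)" using anc_par_ne less.prems by blast+
    have "(\<lambda>x y. {x, y} \<in> F)\<^sup>*\<^sup>* (par y) x"
      using less(1)[of "par y"] dep_lt y less.prems(2) anc_step by blast
    moreover have "{y, par y} \<in> F" using less.prems(2)[of y] less.prems(1) False by simp
    ultimately show ?thesis by (meson converse_rtranclp_into_rtranclp)
  qed simp
qed

lemma ptree_is_tree: "is_tree V edges"
proof -
  have ug: "ugraph V edges" unfolding ugraph_def edges_def using par_in par_ne by blast
  have r0: "(\<lambda>x y. {x, y} \<in> edges)\<^sup>*\<^sup>* y s0" if "y \<in> V" for y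
    by (rule anc_reach[OF anc_s0[OF that]]) (auto simp: edges_def dest: anc_in[OF _ that])
  have "gconnected V edges" unfolding gconnected_def
  proof (intro ballI)
    fix a b assume "a \<in> V" "b \<in> V"
    then show "(\<lambda>x y. {x, y} \<in> edges)\<^sup>*\<^sup>* a b"
      using r0[of a] rtranclp_sym_set[OF r0[of b]] rtranclp_trans by fastforce
  qed
  then show ?thesis unfolding is_tree_def using finV s0V ug card_edges by auto
qed

end



lemma tree_ptree:
  assumes T: "is_tree V E" and s: "s \<in> V"
  shows "\<exists>par dep. ptree V s par dep \<and> E = ptree.edges V s par"
proof -
  define adj where "adj = (\<lambda>x y. {x, y} \<in> E)"
  have fin: "finite V" and ug: "ugraph V E" and gc: "gconnected V E" and cE: "card E = card V - 1"
    using T by (auto simp: is_tree_def)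
  have reach: "\<exists>n. (adj ^^ n) s a" if "a \<in> V" for a
    using gc s that unfolding gconnected_def adj_def by (meson rtranclp_power)
  define dist where "dist a = (LEAST n. (adj ^^ n) s a)" for a
  have dist: "(adj ^^ dist a) s a" if "a \<in> V" for a
    using reach[OF that] unfolding dist_def by (rule LeastI_ex)
  have adjV: "b \<in> V" if "adj b a" for a b
    using ug that unfolding ugraph_def adj_def by (metis doubleton_eq_iff)
  have ex: "\<exists>b. b \<in> V \<and> adj b a \<and> dist b < dist a" if aa: "a \<in> V" "a \<noteq> s" for a
  proof -
    obtain n where n: "dist a = Suc n"
      using dist[OF aa(1)] aa(2) by (cases "dist a") auto
    then obtain b where b: "(adj ^^ n) s b" "adj b a"
      using dist[OF aa(1)] n by (auto simp del: relpowp.simps simp: relpowp_Suc_right) 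
    have "dist b \<le> n" unfolding dist_def using b(1) by (rule Least_le)
    then show ?thesis using b adjV[OF b(2)] n by (intro exI[of _ b]) auto
  qed
  define par where "par a = (SOME b. b \<in> V \<and> adj b a \<and> dist b < dist a)" for a
  have par: "par a \<in> V \<and> adj (par a) a \<and> dist (par a) < dist a" if "a \<in> V" "a \<noteq> s" for a
    unfolding par_def using someI_ex[OF ex[OF that]] .
  interpret ptree V s par dist
    by unfold_locales (use fin s par in auto)
  have sub: "edges \<subseteq> E"
    unfolding edges_def using par by (auto simp: adj_def insert_commute)
  have finE: "finite E"
  proof -
    have "E \<subseteq> Pow V" using ug unfolding ugraph_def by auto
    then show ?thesis using fin by (meson finite_Pow_iff finite_subset)
  qed
  have "edges = E" using card_subset_eq[OF finE sub] card_edges cE by simp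
  then show ?thesis using ptree_axioms by blast
qed



lemma sum_if1: "finite S \<Longrightarrow> (\<Sum>c\<in>S. (if a = c then 1 else 0) * f c) = (if a \<in> S then f a else (0::real))"
proof -
  assume "finite S"
  have "(\<Sum>c\<in>S. (if a = c then 1 else 0) * f c) = (\<Sum>c\<in>S. if a = c then f c else 0)"
    by (rule sum.cong) auto
  then show ?thesis using \<open>finite S\<close> by simp
qed

lemma sum_if2: "finite S \<Longrightarrow> (\<Sum>c\<in>S. f c * (if c = a then 1 else 0)) = (if a \<in> S then f a else (0::real))"
proof -
  assume "finite S"
  have "(\<Sum>c\<in>S. f c * (if c = a then 1 else 0)) = (\<Sum>c\<in>S. if c = a then f c else 0)"
    by (rule sum.cong) auto
  then show ?thesis using \<open>finite S\<close> by simp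
qed

lemma red_inv_eqI:
  fixes H A :: "'v \<Rightarrow> 'v \<Rightarrow> real"
  assumes fin: "finite N"
    and Hs: "\<And>a b. a \<in> N \<Longrightarrow> b \<in> N \<Longrightarrow> H a b = H b a"
    and As: "\<And>a b. A a b = A b a"
    and Asupp: "\<And>a b. A a b \<noteq> 0 \<Longrightarrow> a \<in> N \<and> b \<in> N"
    and inv: "\<And>a b. a \<in> N \<Longrightarrow> b \<in> N \<Longrightarrow> (\<Sum>c\<in>N. H a c * A c b) = (if a = b then 1 else 0)"
  shows "red_inv N H = A"
  unfolding red_inv_def
proof (rule the_equality)
  show "(\<forall>a b. A a b \<noteq> 0 \<longrightarrow> a \<in> N \<and> b \<in> N) \<and>
    (\<forall>a\<in>N. \<forall>b\<in>N. (\<Sum>c\<in>N. H a c * A c b) = (if a = b then 1 else 0))"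
    using Asupp inv by blast
next
  fix A' :: "'v \<Rightarrow> 'v \<Rightarrow> real"
  assume "(\<forall>a b. A' a b \<noteq> 0 \<longrightarrow> a \<in> N \<and> b \<in> N) \<and>
    (\<forall>a\<in>N. \<forall>b\<in>N. (\<Sum>c\<in>N. H a c * A' c b) = (if a = b then 1 else 0))"
  then have A'supp: "\<And>a b. A' a b \<noteq> 0 \<Longrightarrow> a \<in> N \<and> b \<in> N"
    and inv': "\<And>a b. a \<in> N \<Longrightarrow> b \<in> N \<Longrightarrow> (\<Sum>c\<in>N. H a c * A' c b) = (if a = b then 1 else 0)"
    by blast+
  have left: "(\<Sum>d\<in>N. A a d * H d c) = (if a = c then 1 else 0)" if "a \<in> N" "c \<in> N" for a c
  proof -
    have "(\<Sum>d\<in>N. A a d * H d c) = (\<Sum>d\<in>N. H c d * A d a)"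
      by (rule sum.cong) (use that Hs As in auto)
    also have "\<dots> = (if a = c then 1 else 0)" using inv[OF that(2,1)] by auto
    finally show ?thesis .
  qed
  show "A' = A"
  proof (intro ext)
    fix a b
    show "A' a b = A a b"
    proof (cases "a \<in> N \<and> b \<in> N")
      case True
      have "A' a b = (\<Sum>c\<in>N. (if a = c then 1 else 0) * A' c b)"
        using True fin by (simp add: sum_if1)
      also have "\<dots> = (\<Sum>c\<in>N. (\<Sum>d\<in>N. A a d * H d c) * A' c b)"
        by (rule sum.cong) (use left True in auto)
      also have "\<dots> = (\<Sum>d\<in>N. A a d * (\<Sum>c\<in>N. H d c * A' c b))"
        unfolding sum_distrib_left sum_distrib_right mult.assoc by (rule sum.swap)
      also have "\<dots> = (\<Sum>d\<in>N. A a d * (if d = b then 1 else 0))"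
        by (rule sum.cong) (use inv' True in auto)
      also have "\<dots> = A a b" using True fin by (simp add: sum_if2)
      finally show ?thesis .
    next
      case False
      then have "A' a b = 0" "A a b = 0" using A'supp[of a b] Asupp[of a b] by blast+
      then show ?thesis by simp
    qed
  qed
qed

context ptree
begin

definition Amat :: "('v set \<Rightarrow> real) \<Rightarrow> 'v \<Rightarrow> 'v \<Rightarrow> real" where
  "Amat \<rho> a b = (\<Sum>c\<in>{c\<in>V - {s0}. anc c a \<and> anc c b}. \<rho> {c, par c})"

lemma Amat_sym: "Amat \<rho> a b = Amat \<rho> b a"
  unfolding Amat_def by (simp add: conj_commute)

lemma anc_N_in: "c \<in> V - {s0} \<Longrightarrow> anc c a \<Longrightarrow> a \<in> V - {s0}"
  using anc_cases anc_s0_eq by blast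

lemma Amat_supp: "Amat \<rho> a b \<noteq> 0 \<Longrightarrow> a \<in> V - {s0} \<and> b \<in> V - {s0}"
proof (rule ccontr)
  assume "Amat \<rho> a b \<noteq> 0" "\<not> (a \<in> V - {s0} \<and> b \<in> V - {s0})"
  then have "{c\<in>V - {s0}. anc c a \<and> anc c b} = {}" using anc_N_in by blast
  then show False using \<open>Amat \<rho> a b \<noteq> 0\<close> unfolding Amat_def by (metis sum.empty)
qed

lemma Amat_out: "a \<notin> V - {s0} \<Longrightarrow> Amat \<rho> a b = 0"
  using Amat_supp by blast

lemma Amat_step:
  assumes x: "x \<in> V - {s0}"
  shows "Amat \<rho> x b = (if anc x b then \<rho> {x, par x} else 0) + Amat \<rho> (par x) b"
proof -
  have set: "{c\<in>V - {s0}. anc c x \<and> anc c b} =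
     (if anc x b then insert x else id) {c\<in>V - {s0}. anc c (par x) \<and> anc c b}"
    using x anc_cases[of _ x] anc_step[of x] by auto
  have nin: "x \<notin> {c\<in>V - {s0}. anc c (par x) \<and> anc c b}"
    using par_anc_ne x by auto
  have fin: "finite {c\<in>V - {s0}. anc c (par x) \<and> anc c b}" using finV by simp
  show ?thesis unfolding Amat_def set using nin fin by auto
qed

definition ind :: "'v \<Rightarrow> 'v \<Rightarrow> real" where "ind a b = (if a = b then 1 else 0)"

lemma sum_ind: "finite S \<Longrightarrow> (\<Sum>c\<in>S. ind c x * f c) = (if x \<in> S then f x else 0)"
  unfolding ind_def using sum_if1[of S x f] by (simp add: eq_commute)

lemma sum_ind2: "finite S \<Longrightarrow> (\<Sum>c\<in>S. ind x c * f c) = (if x \<in> S then f x else 0)"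
  unfolding ind_def using sum_if1[of S x f] by simp

lemma lap_inc:
  assumes a: "a \<in> V" and c: "c \<in> V"
  shows "laplacian edges g a c =
    (\<Sum>x\<in>V - {s0}. g {x, par x} * (ind a x - ind a (par x)) * (ind c x - ind c (par x)))"
proof (cases "a = c")
  case True
  have "laplacian edges g a c = (\<Sum>e\<in>{e\<in>edges. a \<in> e}. g e)"
    using True by (simp add: laplacian_def)
  also have "{e\<in>edges. a \<in> e} = (\<lambda>x. {x, par x}) ` {x\<in>V - {s0}. a = x \<or> a = par x}"
    unfolding edges_def by auto
  also have "(\<Sum>e\<in>\<dots>. g e) = (\<Sum>x\<in>{x\<in>V - {s0}. a = x \<or> a = par x}. g {x, par x})"
    by (rule sum.reindex_cong[OF inj_on_subset[OF edge_inj]]) auto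
  also have "\<dots> = (\<Sum>x\<in>V - {s0}. if a = x \<or> a = par x then g {x, par x} else 0)"
    by (rule sum.inter_filter) (use finV in simp)
  also have "\<dots> = (\<Sum>x\<in>V - {s0}. g {x, par x} * (ind a x - ind a (par x)) * (ind c x - ind c (par x)))"
  proof (rule sum.cong)
    fix x assume "x \<in> V - {s0}"
    then have "par x \<noteq> x" using par_ne by blast
    then show "(if a = x \<or> a = par x then g {x, par x} else 0) =
      g {x, par x} * (ind a x - ind a (par x)) * (ind c x - ind c (par x))"
      using True by (auto simp: ind_def)
  qed simp
  finally show ?thesis .
next
  case False
  have "(\<Sum>x\<in>V - {s0}. g {x, par x} * (ind a x - ind a (par x)) * (ind c x - ind c (par x)))
      = (\<Sum>x\<in>V - {s0}. if {x, par x} = {a, c} then - g {a, c} else 0)"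
  proof (rule sum.cong)
    fix x assume "x \<in> V - {s0}"
    then have "par x \<noteq> x" using par_ne by blast
    then show "g {x, par x} * (ind a x - ind a (par x)) * (ind c x - ind c (par x)) =
      (if {x, par x} = {a, c} then - g {a, c} else 0)"
      using False by (auto simp: ind_def doubleton_eq_iff insert_commute)
  qed simp
  also have "\<dots> = (\<Sum>x\<in>{x\<in>V - {s0}. {x, par x} = {a, c}}. - g {a, c})"
    by (rule sum.inter_filter[symmetric]) (use finV in simp)
  also have "\<dots> = (if {a, c} \<in> edges then - g {a, c} else 0)"
  proof (cases "{a, c} \<in> edges")
    case True
    then obtain x0 where x0: "x0 \<in> V - {s0}" "{x0, par x0} = {a, c}" unfolding edges_def by auto
    have "{x\<in>V - {s0}. {x, par x} = {a, c}} = {x0}"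
    proof (intro equalityI subsetI)
      fix x assume "x \<in> {x\<in>V - {s0}. {x, par x} = {a, c}}"
      then have "{x, par x} = {x0, par x0}" "x \<in> V - {s0}" using x0 by auto
      then have "x = x0" using inj_onD[OF edge_inj] x0(1) by blast
      then show "x \<in> {x0}" by simp
    qed (use x0 in simp)
    note e = this
    show ?thesis unfolding e using True by simp
  next
    case False
    then have e: "{x\<in>V - {s0}. {x, par x} = {a, c}} = {}" unfolding edges_def by auto
    show ?thesis unfolding e using False by simp
  qed
  also have "\<dots> = laplacian edges g a c" using False by (simp add: laplacian_def)
  finally show ?thesis by simp
qed

lemma children_anc:
  assumes a: "a \<in> V - {s0}" and b: "b \<in> V - {s0}"
  shows "(\<Sum>x\<in>V - {s0}. ind a (par x) * (if anc x b then 1 else 0)) = (if anc a b \<and> a \<noteq> b then 1 else 0)"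
proof -
  have "(\<Sum>x\<in>V - {s0}. ind a (par x) * (if anc x b then 1 else 0))
      = (\<Sum>x\<in>{x\<in>V - {s0}. par x = a \<and> anc x b}. 1)"
    unfolding sum.inter_filter[OF finite_Diff[OF finV]]
    by (rule sum.cong) (auto simp: ind_def)
  also have "\<dots> = (if anc a b \<and> a \<noteq> b then 1 else 0)"
  proof (cases "anc a b \<and> a \<noteq> b")
    case True
    then obtain y where y: "y \<in> V" "y \<noteq> s0" "par y = a" "anc y b" using anc_child by blast
    have "{x\<in>V - {s0}. par x = a \<and> anc x b} = {y}"
    proof (intro equalityI subsetI)
      fix x assume x: "x \<in> {x\<in>V - {s0}. par x = a \<and> anc x b}"
      show "x \<in> {y}"
      proof (rule ccontr)
        assume "x \<notin> {y}"
        then have "x \<noteq> y" by simp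
        have px: "par x = par y" using x y by simp
        have "anc x y \<or> anc y x" using anc_lin x y by blast
        then show False
        proof
          assume "anc x y" then have "anc x (par y)" using anc_par_ne \<open>x \<noteq> y\<close> by blast
          then have "anc x (par x)" using px by simp
          then show False using par_anc_ne[of x] x by auto
        next
          assume "anc y x" then have "anc y (par x)" using anc_par_ne \<open>x \<noteq> y\<close> by metis
          then have "anc y (par y)" using px by simp
          then show False using par_anc_ne[of y] y by auto
        qed
      qed
    qed (use y in auto)
    note e = this
    show ?thesis unfolding e using True by simp
  next
    case False
    have "{x\<in>V - {s0}. par x = a \<and> anc x b} = {}"
    proof (rule ccontr)
      assume "{x\<in>V - {s0}. par x = a \<and> anc x b} \<noteq> {}"
      then obtain x where x: "x \<in> V - {s0}" "par x = a" "anc x b" by auto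
      then have "anc a b" using anc_trans anc_par by blast
      moreover have "a \<noteq> b" using x par_anc_ne by auto
      ultimately show False using False by blast
    qed
    note e = this
    show ?thesis unfolding e using False by simp
  qed
  finally show ?thesis .
qed

lemma red_inv_Amat:
  assumes pos: "\<And>x. x \<in> V - {s0} \<Longrightarrow> \<rho> {x, par x} > 0"
  shows "red_inv (V - {s0}) (laplacian edges (\<lambda>e. 1 / \<rho> e)) = Amat \<rho>"
proof (rule red_inv_eqI)
  show "finite (V - {s0})" using finV by simp
  show "laplacian edges (\<lambda>e. 1 / \<rho> e) a b = laplacian edges (\<lambda>e. 1 / \<rho> e) b a" for a b
    by (simp add: laplacian_def insert_commute)
  show "Amat \<rho> a b = Amat \<rho> b a" for a b by (rule Amat_sym)
  show "Amat \<rho> a b \<noteq> 0 \<Longrightarrow> a \<in> V - {s0} \<and> b \<in> V - {s0}" for a b by (rule Amat_supp)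
  fix a b assume a: "a \<in> V - {s0}" and b: "b \<in> V - {s0}"
  define g where "g = (\<lambda>e. 1 / \<rho> e)"
  let ?L = "laplacian edges g"
  have "(\<Sum>c\<in>V - {s0}. ?L a c * Amat \<rho> c b) = (\<Sum>c\<in>V. ?L a c * Amat \<rho> c b)"
    using finV s0V Amat_out[of s0] by (simp add: sum.remove[of V s0])
  also have "\<dots> = (\<Sum>c\<in>V. \<Sum>x\<in>V - {s0}. g {x, par x} * (ind a x - ind a (par x)) * ((ind c x - ind c (par x)) * Amat \<rho> c b))"
    by (rule sum.cong) (use a in \<open>auto simp: lap_inc sum_distrib_right mult.assoc\<close>)
  also have "\<dots> = (\<Sum>x\<in>V - {s0}. g {x, par x} * (ind a x - ind a (par x)) * (\<Sum>c\<in>V. (ind c x - ind c (par x)) * Amat \<rho> c b))"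
    by (subst sum.swap) (simp add: sum_distrib_left)
  also have "\<dots> = (\<Sum>x\<in>V - {s0}. g {x, par x} * (ind a x - ind a (par x)) * (Amat \<rho> x b - Amat \<rho> (par x) b))"
  proof (rule sum.cong)
    fix x assume x: "x \<in> V - {s0}"
    have "(\<Sum>c\<in>V. (ind c x - ind c (par x)) * Amat \<rho> c b) = (\<Sum>c\<in>V. ind c x * Amat \<rho> c b) - (\<Sum>c\<in>V. ind c (par x) * Amat \<rho> c b)"
      by (simp add: left_diff_distrib sum_subtractf)
    also have "\<dots> = Amat \<rho> x b - Amat \<rho> (par x) b"
      using x par_in finV by (simp add: sum_ind)
    finally show "g {x, par x} * (ind a x - ind a (par x)) * (\<Sum>c\<in>V. (ind c x - ind c (par x)) * Amat \<rho> c b) =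
      g {x, par x} * (ind a x - ind a (par x)) * (Amat \<rho> x b - Amat \<rho> (par x) b)" by simp
  qed simp
  also have "\<dots> = (\<Sum>x\<in>V - {s0}. (ind a x - ind a (par x)) * (if anc x b then 1 else 0))"
  proof (rule sum.cong)
    fix x assume x: "x \<in> V - {s0}"
    show "g {x, par x} * (ind a x - ind a (par x)) * (Amat \<rho> x b - Amat \<rho> (par x) b) =
      (ind a x - ind a (par x)) * (if anc x b then 1 else 0)"
      using Amat_step[OF x, of \<rho> b] pos[OF x] by (simp add: g_def)
  qed simp
  also have "\<dots> = (\<Sum>x\<in>V - {s0}. ind a x * (if anc x b then 1 else 0)) - (\<Sum>x\<in>V - {s0}. ind a (par x) * (if anc x b then 1 else 0))"
    by (simp add: left_diff_distrib sum_subtractf)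
  also have "\<dots> = (if anc a b then 1 else 0) - (if anc a b \<and> a \<noteq> b then 1 else 0)"
    using children_anc[OF a b] a finV by (simp add: sum_ind2)
  also have "\<dots> = (if a = b then 1 else 0)" by auto
  finally show "(\<Sum>c\<in>V - {s0}. laplacian edges (\<lambda>e. 1 / \<rho> e) a c * Amat \<rho> c b) = (if a = b then 1 else 0)"
    by (simp add: g_def)
qed

end


definition L2 :: "'w measure \<Rightarrow> ('w \<Rightarrow> real) \<Rightarrow> bool" where
  "L2 M f \<longleftrightarrow> f \<in> borel_measurable M \<and> integrable M (\<lambda>x. (f x)\<^sup>2)"

lemma abs_mult_le_sq: "\<bar>a * b\<bar> \<le> a\<^sup>2 + (b::real)\<^sup>2"
proof -
  have "0 \<le> (\<bar>a\<bar> - \<bar>b\<bar>)\<^sup>2" by simp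
  then have "2 * (\<bar>a\<bar> * \<bar>b\<bar>) \<le> \<bar>a\<bar>\<^sup>2 + \<bar>b\<bar>\<^sup>2" by (simp add: power2_eq_square algebra_simps)
  moreover have "0 \<le> \<bar>a\<bar> * \<bar>b\<bar>" by simp
  moreover have "\<bar>a * b\<bar> = \<bar>a\<bar> * \<bar>b\<bar>" by (simp add: abs_mult)
  moreover have "\<bar>a\<bar>\<^sup>2 = a\<^sup>2" "\<bar>b\<bar>\<^sup>2 = b\<^sup>2" by simp_all
  ultimately show ?thesis by linarith
qed

context finite_measure
begin

lemma L2_integrable: "L2 M f \<Longrightarrow> integrable M f"
  unfolding L2_def using square_integrable_imp_integrable by blast

lemma L2_mult: "L2 M f \<Longrightarrow> L2 M g \<Longrightarrow> integrable M (\<lambda>x. f x * g x)"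
  unfolding L2_def
proof (elim conjE)
  assume fm: "f \<in> borel_measurable M" and gm: "g \<in> borel_measurable M"
    and f2: "integrable M (\<lambda>x. (f x)\<^sup>2)" and g2: "integrable M (\<lambda>x. (g x)\<^sup>2)"
  have "integrable M (\<lambda>x. (f x)\<^sup>2 + (g x)\<^sup>2)" using f2 g2 by simp
  then show "integrable M (\<lambda>x. f x * g x)"
  proof (rule Bochner_Integration.integrable_bound)
    show "(\<lambda>x. f x * g x) \<in> borel_measurable M" using fm gm by (rule borel_measurable_times)
    show "AE x in M. norm (f x * g x) \<le> norm ((f x)\<^sup>2 + (g x)\<^sup>2)"
      using abs_mult_le_sq by (intro AE_I2) (simp add: abs_of_nonneg)
  qed
qed

lemma L2_add: "L2 M f \<Longrightarrow> L2 M g \<Longrightarrow> L2 M (\<lambda>x. f x + g x)"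
proof -
  assume f: "L2 M f" and g: "L2 M g"
  have "integrable M (\<lambda>x. (f x)\<^sup>2 + 2 * (f x * g x) + (g x)\<^sup>2)"
    using f g L2_mult[OF f g] unfolding L2_def by simp
  moreover have "(\<lambda>x. (f x + g x)\<^sup>2) = (\<lambda>x. (f x)\<^sup>2 + 2 * (f x * g x) + (g x)\<^sup>2)"
    by (rule ext) (simp add: power2_eq_square algebra_simps)
  ultimately have "integrable M (\<lambda>x. (f x + g x)\<^sup>2)" by simp
  then show ?thesis using f g unfolding L2_def by (auto intro: borel_measurable_add)
qed

lemma L2_scale: "L2 M f \<Longrightarrow> L2 M (\<lambda>x. c * f x)"
  unfolding L2_def by (auto simp: power_mult_distrib intro: borel_measurable_times)

lemma L2_const: "L2 M (\<lambda>x. c)"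
  unfolding L2_def by simp

lemma L2_sum: "finite I \<Longrightarrow> (\<And>i. i \<in> I \<Longrightarrow> L2 M (f i)) \<Longrightarrow> L2 M (\<lambda>x. \<Sum>i\<in>I. f i x)"
proof (induction I rule: finite_induct)
  case empty then show ?case using L2_const[of 0] by simp
next
  case (insert i I) then show ?case using L2_add[of "f i" "\<lambda>x. \<Sum>i\<in>I. f i x"] by simp
qed

lemma integral_sq_sum:
  assumes "finite I" "\<And>i. i \<in> I \<Longrightarrow> L2 M (Y i)"
  shows "(\<integral>x. (\<Sum>i\<in>I. Y i x)\<^sup>2 \<partial>M) = (\<Sum>i\<in>I. \<Sum>j\<in>I. \<integral>x. Y i x * Y j x \<partial>M)"
proof -
  have "(\<lambda>x. (\<Sum>i\<in>I. Y i x)\<^sup>2) = (\<lambda>x. \<Sum>i\<in>I. \<Sum>j\<in>I. Y i x * Y j x)"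
    by (simp add: power2_eq_square sum_product)
  moreover have "integrable M (\<lambda>x. Y i x * Y j x)" if "i \<in> I" "j \<in> I" for i j
    using L2_mult assms that by blast
  ultimately show ?thesis by (simp add: integral_sum)
qed

end

definition cterm :: "'w measure \<Rightarrow> ('v \<Rightarrow> 'w \<Rightarrow> real) \<Rightarrow> ('v \<Rightarrow> 'w \<Rightarrow> real) \<Rightarrow> 'v \<Rightarrow> real \<Rightarrow> real \<Rightarrow> real" where
  "cterm M p q d s t = s\<^sup>2 * cov M (p d) (p d) + 2 * s * t * cov M (q d) (p d) + t\<^sup>2 * cov M (q d) (q d)"

lemma phi_formula:
  fixes p q :: "'v \<Rightarrow> 'w \<Rightarrow> real" and v :: "'v \<Rightarrow> 'w \<Rightarrow> real"
  assumes prob: "prob_space M" and finN: "finite N"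
    and pL: "\<And>d. d \<in> N \<Longrightarrow> L2 M (p d)" and qL: "\<And>d. d \<in> N \<Longrightarrow> L2 M (q d)"
    and cov_p: "\<forall>a\<in>N. \<forall>b\<in>N. a \<noteq> b \<longrightarrow> cov M (p a) (p b) = 0"
    and cov_q: "\<forall>a\<in>N. \<forall>b\<in>N. a \<noteq> b \<longrightarrow> cov M (q a) (q b) = 0"
    and cov_qp: "\<forall>a\<in>N. \<forall>b\<in>N. a \<noteq> b \<longrightarrow> cov M (q a) (p b) = 0"
    and vu: "v u = (\<lambda>x. cu + (\<Sum>d\<in>N. Ar u d * p d x + Ax u d * q d x))"
    and vw: "v w = (\<lambda>x. cw + (\<Sum>d\<in>N. Ar w d * p d x + Ax w d * q d x))"
  shows "phi M v u w = (\<Sum>d\<in>N. cterm M p q d (Ar u d - Ar w d) (Ax u d - Ax w d))"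
proof -
  interpret prob_space M by (rule prob)
  define P where "P d x = p d x - (\<integral>z. p d z \<partial>M)" for d x
  define Q where "Q d x = q d x - (\<integral>z. q d z \<partial>M)" for d x
  have PL: "L2 M (P d)" if "d \<in> N" for d
    unfolding P_def using L2_add[OF pL[OF that] L2_const[of "- (\<integral>z. p d z \<partial>M)"]] by simp
  have QL: "L2 M (Q d)" if "d \<in> N" for d
    unfolding Q_def using L2_add[OF qL[OF that] L2_const[of "- (\<integral>z. q d z \<partial>M)"]] by simp
  have ip: "integrable M (p d)" if "d \<in> N" for d using L2_integrable pL that by blast
  have iq: "integrable M (q d)" if "d \<in> N" for d using L2_integrable qL that by blast
  have cent: "v a x - (\<integral>z. v a z \<partial>M) = (\<Sum>d\<in>N. Ar a d * P d x + Ax a d * Q d x)"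
    if va: "v a = (\<lambda>x. c + (\<Sum>d\<in>N. Ar a d * p d x + Ax a d * q d x))" for a c x
  proof -
    have "(\<integral>z. v a z \<partial>M) = c + (\<Sum>d\<in>N. Ar a d * (\<integral>z. p d z \<partial>M) + Ax a d * (\<integral>z. q d z \<partial>M))"
      unfolding va using ip iq prob_space by (simp add: integral_sum integral_add)
    then show ?thesis unfolding va P_def Q_def
      by (simp add: algebra_simps sum.distrib sum_subtractf)
  qed
  define Y where "Y d x = (Ar u d - Ar w d) * P d x + (Ax u d - Ax w d) * Q d x" for d x
  have YL: "L2 M (Y d)" if "d \<in> N" for d
    unfolding Y_def using L2_add[OF L2_scale[OF PL] L2_scale[OF QL]] that by blast
  have "phi M v u w = (\<integral>x. (\<Sum>d\<in>N. Y d x)\<^sup>2 \<partial>M)"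
  proof -
    have d: "(\<Sum>d\<in>N. Ar u d * P d x + Ax u d * Q d x) - (\<Sum>d\<in>N. Ar w d * P d x + Ax w d * Q d x) = (\<Sum>d\<in>N. Y d x)" for x
      unfolding Y_def sum_subtractf[symmetric] by (rule sum.cong) (auto simp: algebra_simps)
    show ?thesis unfolding phi_def cent[OF vu] cent[OF vw] d ..
  qed
  also have "\<dots> = (\<Sum>d\<in>N. \<Sum>e\<in>N. \<integral>x. Y d x * Y e x \<partial>M)"
    using integral_sq_sum[OF finN YL] by simp
  also have "\<dots> = (\<Sum>d\<in>N. cterm M p q d (Ar u d - Ar w d) (Ax u d - Ax w d))"
  proof (rule sum.cong)
    fix d assume d: "d \<in> N"
    have cPP: "(\<integral>x. P a x * P b x \<partial>M) = cov M (p a) (p b)" for a b unfolding cov_def P_def ..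
    have cQQ: "(\<integral>x. Q a x * Q b x \<partial>M) = cov M (q a) (q b)" for a b unfolding cov_def Q_def ..
    have cQP: "(\<integral>x. Q a x * P b x \<partial>M) = cov M (q a) (p b)" for a b unfolding cov_def Q_def P_def ..
    have cPQ: "(\<integral>x. P a x * Q b x \<partial>M) = cov M (q b) (p a)" for a b
      unfolding cov_def Q_def P_def by (simp add: mult.commute)
    have trm: "(\<integral>x. Y d x * Y e x \<partial>M) =
        (Ar u d - Ar w d) * (Ar u e - Ar w e) * cov M (p d) (p e)
      + (Ar u d - Ar w d) * (Ax u e - Ax w e) * cov M (q e) (p d)
      + (Ax u d - Ax w d) * (Ar u e - Ar w e) * cov M (q d) (p e)
      + (Ax u d - Ax w d) * (Ax u e - Ax w e) * cov M (q d) (q e)" if e: "e \<in> N" for e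
    proof -
      have "(\<lambda>x. Y d x * Y e x) = (\<lambda>x.
          (Ar u d - Ar w d) * (Ar u e - Ar w e) * (P d x * P e x)
        + (Ar u d - Ar w d) * (Ax u e - Ax w e) * (P d x * Q e x)
        + (Ax u d - Ax w d) * (Ar u e - Ar w e) * (Q d x * P e x)
        + (Ax u d - Ax w d) * (Ax u e - Ax w e) * (Q d x * Q e x))"
        unfolding Y_def by (simp add: algebra_simps)
      moreover have "integrable M (\<lambda>x. P d x * P e x)" "integrable M (\<lambda>x. P d x * Q e x)"
        "integrable M (\<lambda>x. Q d x * P e x)" "integrable M (\<lambda>x. Q d x * Q e x)"
        using L2_mult PL QL d e by blast+
      ultimately show ?thesis using cPP cQQ cQP cPQ by simp
    qed
    have "(\<Sum>e\<in>N. \<integral>x. Y d x * Y e x \<partial>M) = (\<Sum>e\<in>N. if e = d then cterm M p q d (Ar u d - Ar w d) (Ax u d - Ax w d) else 0)"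
    proof (rule sum.cong)
      fix e assume e: "e \<in> N"
      show "(\<integral>x. Y d x * Y e x \<partial>M) = (if e = d then cterm M p q d (Ar u d - Ar w d) (Ax u d - Ax w d) else 0)"
      proof (cases "e = d")
        case True
        then show ?thesis using trm[OF e] by (simp add: cterm_def power2_eq_square algebra_simps)
      next
        case False
        then show ?thesis using trm[OF e] cov_p cov_q cov_qp d e by auto
      qed
    qed simp
    also have "\<dots> = cterm M p q d (Ar u d - Ar w d) (Ax u d - Ax w d)" using finN d by simp
    finally show "(\<Sum>e\<in>N. \<integral>x. Y d x * Y e x \<partial>M) = cterm M p q d (Ar u d - Ar w d) (Ax u d - Ax w d)" .
  qed simp
  finally show ?thesis .
qed



definition Fq :: "real \<Rightarrow> real \<Rightarrow> real \<Rightarrow> real \<Rightarrow> real \<Rightarrow> real" where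
  "Fq A B C s t = s\<^sup>2 * A + 2 * s * t * C + t\<^sup>2 * B"

lemma Fq_neg: "Fq A B C (- s) (- t) = Fq A B C s t"
  unfolding Fq_def by simp

lemma Fq_mono:
  assumes "0 \<le> A" "0 \<le> B" "0 \<le> C" "0 \<le> s1" "s1 \<le> s2" "0 \<le> t1" "t1 \<le> t2"
  shows "Fq A B C s1 t1 \<le> Fq A B C s2 t2"
proof -
  have "s1\<^sup>2 \<le> s2\<^sup>2" "t1\<^sup>2 \<le> t2\<^sup>2" using assms by (auto intro: power_mono)
  moreover have "s1 * t1 \<le> s2 * t2" using assms by (auto intro: mult_mono)
  ultimately have "s1\<^sup>2 * A \<le> s2\<^sup>2 * A" "t1\<^sup>2 * B \<le> t2\<^sup>2 * B" "(s1 * t1) * C \<le> (s2 * t2) * C"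
    using assms by (auto intro: mult_right_mono less_imp_le)
  then have "s1\<^sup>2 * A \<le> s2\<^sup>2 * A" "t1\<^sup>2 * B \<le> t2\<^sup>2 * B" "2 * s1 * t1 * C \<le> 2 * s2 * t2 * C"
    by (simp_all add: mult.assoc)
  then show ?thesis unfolding Fq_def by linarith
qed

lemma Fq_strict:
  assumes "0 \<le> A" "0 \<le> B" "0 \<le> C" "0 < A + B" "0 \<le> s1" "s1 < s2" "0 \<le> t1" "t1 < t2"
  shows "Fq A B C s1 t1 < Fq A B C s2 t2"
proof -
  have "s1\<^sup>2 < s2\<^sup>2" "t1\<^sup>2 < t2\<^sup>2" using assms by (auto intro: power_strict_mono)
  moreover have "s1 * t1 \<le> s2 * t2" using assms by (auto intro: mult_mono)
  ultimately have "s1\<^sup>2 * A \<le> s2\<^sup>2 * A" "t1\<^sup>2 * B \<le> t2\<^sup>2 * B" "(s1 * t1) * C \<le> (s2 * t2) * C"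
    using assms by (auto intro: mult_right_mono less_imp_le)
  then have "s1\<^sup>2 * A \<le> s2\<^sup>2 * A" "t1\<^sup>2 * B \<le> t2\<^sup>2 * B" "2 * s1 * t1 * C \<le> 2 * s2 * t2 * C"
    by (simp_all add: mult.assoc)
  moreover have "s1\<^sup>2 * A < s2\<^sup>2 * A \<or> t1\<^sup>2 * B < t2\<^sup>2 * B"
  proof (cases "0 < A")
    case True then show ?thesis using \<open>s1\<^sup>2 < s2\<^sup>2\<close> by simp
  next
    case False then have "0 < B" using assms by linarith
    then show ?thesis using \<open>t1\<^sup>2 < t2\<^sup>2\<close> by simp
  qed
  ultimately show ?thesis unfolding Fq_def by linarith
qed

context ptree
begin

definition Cset where "Cset d y = {c\<in>V - {s0}. anc c y \<and> anc c d}"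
definition Rs :: "('v set \<Rightarrow> real) \<Rightarrow> 'v set \<Rightarrow> real" where "Rs \<rho> S = (\<Sum>c\<in>S. \<rho> {c, par c})"

lemma Amat_Cset: "Amat \<rho> y d = Rs \<rho> (Cset d y)"
  unfolding Amat_def Rs_def Cset_def ..

lemma finite_Cset: "finite (Cset d y)" unfolding Cset_def using finV by simp

definition btw where "btw u b w \<longleftrightarrow> (anc b u \<or> anc b w) \<and> (\<forall>z. anc z u \<and> anc z w \<longrightarrow> anc z b)"

lemma Cset_nested: "Cset d u \<subseteq> Cset d w \<or> Cset d w \<subseteq> Cset d u"
proof (rule ccontr)
  assume "\<not> ?thesis"
  then obtain x y where x: "x \<in> Cset d u" "x \<notin> Cset d w" and y: "y \<in> Cset d w" "y \<notin> Cset d u"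
    by blast
  have "anc x d" "anc y d" using x y unfolding Cset_def by auto
  then have "anc x y \<or> anc y x" using anc_lin by blast
  then show False
  proof
    assume "anc x y" then show False using x y anc_trans unfolding Cset_def by blast
  next
    assume "anc y x" then show False using x y anc_trans unfolding Cset_def by blast
  qed
qed

lemma Cset_btw: "btw u b w \<Longrightarrow> Cset d u \<inter> Cset d w \<subseteq> Cset d b \<and> Cset d b \<subseteq> Cset d u \<union> Cset d w"
  unfolding btw_def Cset_def using anc_trans by blast

lemma Rs_diff: "S \<subseteq> T \<Longrightarrow> Rs \<rho> T - Rs \<rho> S = Rs \<rho> (T - S)" if "finite T"
  unfolding Rs_def using that by (simp add: sum_diff)

lemma Rs_nonneg: "(\<And>c. c \<in> V - {s0} \<Longrightarrow> \<rho> {c, par c} > 0) \<Longrightarrow> S \<subseteq> V - {s0} \<Longrightarrow> 0 \<le> Rs \<rho> S"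
  unfolding Rs_def by (rule sum_nonneg) (meson less_imp_le subsetD)

lemma Rs_mono:
  assumes pos: "\<And>c. c \<in> V - {s0} \<Longrightarrow> \<rho> {c, par c} > 0" and "S \<subseteq> T" "T \<subseteq> V - {s0}"
  shows "Rs \<rho> S \<le> Rs \<rho> T"
  unfolding Rs_def
  by (rule sum_mono2) (use assms finV in \<open>auto intro: finite_subset less_imp_le\<close>)

lemma Rs_strict:
  assumes pos: "\<And>c. c \<in> V - {s0} \<Longrightarrow> \<rho> {c, par c} > 0" and "S \<subset> T" "T \<subseteq> V - {s0}"
  shows "Rs \<rho> S < Rs \<rho> T"
proof -
  have fT: "finite T" using assms finV finite_subset by blast
  have "Rs \<rho> T - Rs \<rho> S = Rs \<rho> (T - S)" using Rs_diff[OF fT] assms by blast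
  moreover have "0 < Rs \<rho> (T - S)"
    unfolding Rs_def
  proof (rule sum_pos)
    show "finite (T - S)" using fT by simp
    show "T - S \<noteq> {}" using assms by blast
    show "\<And>i. i \<in> T - S \<Longrightarrow> 0 < \<rho> {i, par i}" using assms pos by blast
  qed
  ultimately show ?thesis by linarith
qed

lemma term_mono:
  assumes posr: "\<And>c. c \<in> V - {s0} \<Longrightarrow> r {c, par c} > 0"
    and posx: "\<And>c. c \<in> V - {s0} \<Longrightarrow> x {c, par c} > 0"
    and ABC: "0 \<le> A" "0 \<le> B" "0 \<le> C"
    and bt: "btw u b w"
  shows "Fq A B C (Amat r u d - Amat r b d) (Amat x u d - Amat x b d)
       \<le> Fq A B C (Amat r u d - Amat r w d) (Amat x u d - Amat x w d)"
    and "Cset d b \<noteq> Cset d w \<Longrightarrow> 0 < A + B \<Longrightarrow>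
         Fq A B C (Amat r u d - Amat r b d) (Amat x u d - Amat x b d)
       < Fq A B C (Amat r u d - Amat r w d) (Amat x u d - Amat x w d)"
proof -
  let ?u = "Cset d u" and ?b = "Cset d b" and ?w = "Cset d w"
  have sub: "?u \<subseteq> V - {s0}" "?b \<subseteq> V - {s0}" "?w \<subseteq> V - {s0}" unfolding Cset_def by auto
  have fin: "finite ?u" "finite ?b" "finite ?w" by (simp_all add: finite_Cset)
  have bb: "?u \<inter> ?w \<subseteq> ?b" "?b \<subseteq> ?u \<union> ?w" using Cset_btw[OF bt] by auto
  have "(Fq A B C (Amat r u d - Amat r b d) (Amat x u d - Amat x b d)
       \<le> Fq A B C (Amat r u d - Amat r w d) (Amat x u d - Amat x w d)) \<and>
     (?b \<noteq> ?w \<longrightarrow> 0 < A + B \<longrightarrow> Fq A B C (Amat r u d - Amat r b d) (Amat x u d - Amat x b d)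
       < Fq A B C (Amat r u d - Amat r w d) (Amat x u d - Amat x w d))"
  proof (cases "?u \<subseteq> ?w")
    case True
    then have c: "?u \<subseteq> ?b" "?b \<subseteq> ?w" using bb by auto
    have e: "Amat \<rho> u d - Amat \<rho> b d = - Rs \<rho> (?b - ?u)" "Amat \<rho> u d - Amat \<rho> w d = - Rs \<rho> (?w - ?u)" for \<rho>
      unfolding Amat_Cset using Rs_diff[OF fin(2) c(1), of \<rho>] Rs_diff[OF fin(3) True, of \<rho>] by linarith+
    have s1: "?b - ?u \<subseteq> ?w - ?u" "?w - ?u \<subseteq> V - {s0}" using c sub by auto
    have nn: "0 \<le> Rs \<rho> (?b - ?u)" if "\<And>c. c \<in> V - {s0} \<Longrightarrow> \<rho> {c, par c} > 0" for \<rho>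
      by (rule Rs_nonneg[where \<rho>=\<rho>, OF that]) (use sub in auto)
    show ?thesis unfolding e Fq_neg
    proof
      show "Fq A B C (Rs r (?b - ?u)) (Rs x (?b - ?u)) \<le> Fq A B C (Rs r (?w - ?u)) (Rs x (?w - ?u))"
        by (rule Fq_mono[OF ABC nn[of r, OF posr] Rs_mono[where \<rho>=r, OF posr s1] nn[of x, OF posx] Rs_mono[where \<rho>=x, OF posx s1]])
      show "?b \<noteq> ?w \<longrightarrow> 0 < A + B \<longrightarrow> Fq A B C (Rs r (?b - ?u)) (Rs x (?b - ?u)) < Fq A B C (Rs r (?w - ?u)) (Rs x (?w - ?u))"
      proof (intro impI)
        assume "?b \<noteq> ?w" "0 < A + B"
        then have s2: "?b - ?u \<subset> ?w - ?u" using c by blast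
        show "Fq A B C (Rs r (?b - ?u)) (Rs x (?b - ?u)) < Fq A B C (Rs r (?w - ?u)) (Rs x (?w - ?u))"
          by (rule Fq_strict[OF ABC \<open>0 < A + B\<close> nn[of r, OF posr] Rs_strict[where \<rho>=r, OF posr s2 s1(2)] nn[of x, OF posx] Rs_strict[where \<rho>=x, OF posx s2 s1(2)]])
      qed
    qed
  next
    case False
    then have W: "?w \<subseteq> ?u" using Cset_nested by blast
    then have c: "?w \<subseteq> ?b" "?b \<subseteq> ?u" using bb by auto
    have e: "Amat \<rho> u d - Amat \<rho> b d = Rs \<rho> (?u - ?b)" "Amat \<rho> u d - Amat \<rho> w d = Rs \<rho> (?u - ?w)" for \<rho>
      unfolding Amat_Cset using Rs_diff[OF fin(1) c(2), of \<rho>] Rs_diff[OF fin(1) W, of \<rho>] by linarith+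
    have s1: "?u - ?b \<subseteq> ?u - ?w" "?u - ?w \<subseteq> V - {s0}" using c sub by auto
    have nn: "0 \<le> Rs \<rho> (?u - ?b)" if "\<And>c. c \<in> V - {s0} \<Longrightarrow> \<rho> {c, par c} > 0" for \<rho>
      by (rule Rs_nonneg[where \<rho>=\<rho>, OF that]) (use sub in auto)
    show ?thesis unfolding e
    proof
      show "Fq A B C (Rs r (?u - ?b)) (Rs x (?u - ?b)) \<le> Fq A B C (Rs r (?u - ?w)) (Rs x (?u - ?w))"
        by (rule Fq_mono[OF ABC nn[of r, OF posr] Rs_mono[where \<rho>=r, OF posr s1] nn[of x, OF posx] Rs_mono[where \<rho>=x, OF posx s1]])
      show "?b \<noteq> ?w \<longrightarrow> 0 < A + B \<longrightarrow> Fq A B C (Rs r (?u - ?b)) (Rs x (?u - ?b)) < Fq A B C (Rs r (?u - ?w)) (Rs x (?u - ?w))"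
      proof (intro impI)
        assume "?b \<noteq> ?w" "0 < A + B"
        then have s2: "?u - ?b \<subset> ?u - ?w" using c by blast
        show "Fq A B C (Rs r (?u - ?b)) (Rs x (?u - ?b)) < Fq A B C (Rs r (?u - ?w)) (Rs x (?u - ?w))"
          by (rule Fq_strict[OF ABC \<open>0 < A + B\<close> nn[of r, OF posr] Rs_strict[where \<rho>=r, OF posr s2 s1(2)] nn[of x, OF posx] Rs_strict[where \<rho>=x, OF posx s2 s1(2)]])
      qed
    qed
  qed
  then show "Fq A B C (Amat r u d - Amat r b d) (Amat x u d - Amat x b d)
       \<le> Fq A B C (Amat r u d - Amat r w d) (Amat x u d - Amat x w d)"
    and "Cset d b \<noteq> Cset d w \<Longrightarrow> 0 < A + B \<Longrightarrow>
         Fq A B C (Amat r u d - Amat r b d) (Amat x u d - Amat x b d)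
       < Fq A B C (Amat r u d - Amat r w d) (Amat x u d - Amat x w d)" by blast+
qed

lemma sum_terms_strict:
  assumes posr: "\<And>c. c \<in> V - {s0} \<Longrightarrow> r {c, par c} > 0"
    and posx: "\<And>c. c \<in> V - {s0} \<Longrightarrow> x {c, par c} > 0"
    and ABC: "\<And>d. d \<in> V - {s0} \<Longrightarrow> 0 \<le> A d \<and> 0 \<le> B d \<and> 0 \<le> C d \<and> 0 < A d + B d"
    and bt: "btw u b w" and bw: "b \<noteq> w" and V: "b \<in> V" "w \<in> V"
  shows "(\<Sum>d\<in>V - {s0}. Fq (A d) (B d) (C d) (Amat r u d - Amat r b d) (Amat x u d - Amat x b d))
       < (\<Sum>d\<in>V - {s0}. Fq (A d) (B d) (C d) (Amat r u d - Amat r w d) (Amat x u d - Amat x w d))"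
proof (rule sum_strict_mono_ex1)
  show "finite (V - {s0})" using finV by simp
  show "\<forall>d\<in>V - {s0}. Fq (A d) (B d) (C d) (Amat r u d - Amat r b d) (Amat x u d - Amat x b d)
       \<le> Fq (A d) (B d) (C d) (Amat r u d - Amat r w d) (Amat x u d - Amat x w d)"
  proof
    fix d assume "d \<in> V - {s0}"
    then have "0 \<le> A d" "0 \<le> B d" "0 \<le> C d" using ABC by auto
    from term_mono(1)[where r=r and x=x, OF posr posx this bt]
    show "Fq (A d) (B d) (C d) (Amat r u d - Amat r b d) (Amat x u d - Amat x b d)
       \<le> Fq (A d) (B d) (C d) (Amat r u d - Amat r w d) (Amat x u d - Amat x w d)" .
  qed
  obtain d0 where d0: "d0 \<in> V - {s0}" "Cset d0 b \<noteq> Cset d0 w"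
  proof (cases "anc w b")
    case False
    then have "w \<noteq> s0" using anc_s0 V by blast
    moreover have "w \<in> Cset w w" "w \<notin> Cset w b" using False V \<open>w \<noteq> s0\<close> unfolding Cset_def by auto
    ultimately show ?thesis using that[of w] V by blast
  next
    case True
    then have "b \<noteq> s0" using anc_s0_eq bw by blast
    moreover have "b \<in> Cset b b" "b \<notin> Cset b w" using True V \<open>b \<noteq> s0\<close> bw anc_antisym unfolding Cset_def by auto
    ultimately show ?thesis using that[of b] V by blast
  qed
  then show "\<exists>d\<in>V - {s0}. Fq (A d) (B d) (C d) (Amat r u d - Amat r b d) (Amat x u d - Amat x b d)
       < Fq (A d) (B d) (C d) (Amat r u d - Amat r w d) (Amat x u d - Amat x w d)"
  proof -
    have "0 \<le> A d0" "0 \<le> B d0" "0 \<le> C d0" "0 < A d0 + B d0" using ABC d0 by auto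
    from term_mono(2)[where r=r and x=x, OF posr posx this(1-3) bt d0(2) this(4)] d0(1) show ?thesis by blast
  qed
qed

end


context ptree
begin

lemma btw_sym: "btw u b w \<longleftrightarrow> btw w b u"
  unfolding btw_def by blast

lemma btw_trans: "btw u b w \<Longrightarrow> btw u c b \<Longrightarrow> btw u c w"
  unfolding btw_def using anc_trans by blast

lemma btw_antisym: "btw u b w \<Longrightarrow> btw b u w \<Longrightarrow> u = b"
proof -
  assume h1: "btw u b w" and h2: "btw b u w"
  have "anc b u"
  proof -
    have "anc b u \<or> anc b w" using h1 unfolding btw_def by blast
    then show ?thesis
    proof
      assume "anc b w" then show ?thesis using h2 unfolding btw_def using anc_refl by blast
    qed
  qed
  moreover have "anc u b"
  proof -
    have "anc u b \<or> anc u w" using h2 unfolding btw_def by blast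
    then show ?thesis
    proof
      assume "anc u w" then show ?thesis using h1 unfolding btw_def using anc_refl by blast
    qed
  qed
  ultimately show ?thesis using anc_antisym by blast
qed

lemma btw_refl: "btw u u w"
  unfolding btw_def by simp

lemma btw_par:
  assumes "anc x u" "\<not> anc x w" "w \<in> V" "u \<in> V"
  shows "x \<in> V - {s0} \<and> btw u (par x) w"
proof -
  have x: "x \<noteq> s0" using assms anc_s0 by blast
  have xV: "x \<in> V" using assms anc_in by blast
  have "anc (par x) u" using assms anc_trans anc_par x xV by blast
  moreover have "anc z (par x)" if "anc z u" "anc z w" for z
  proof -
    have "anc z x \<or> anc x z" using anc_lin that assms by blast
    then have "anc z x" using assms that anc_trans by blast
    moreover have "z \<noteq> x" using assms that by blast
    ultimately show ?thesis using anc_par_ne by blast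
  qed
  ultimately show ?thesis unfolding btw_def using x xV by blast
qed

lemma card_btw_less:
  assumes "btw u b w" "b \<noteq> u" "b \<noteq> w" "u \<in> V" "w \<in> V"
  shows "card {c\<in>V. btw b c w} < card {c\<in>V. btw u c w}"
    and "card {c\<in>V. btw u c b} < card {c\<in>V. btw u c w}"
proof -
  have fin: "finite {c\<in>V. btw u c w}" using finV by simp
  have "{c\<in>V. btw b c w} \<subseteq> {c\<in>V. btw u c w} - {u}"
  proof
    fix c assume c: "c \<in> {c\<in>V. btw b c w}"
    then have "btw w c u" using btw_trans[of w b u c] assms btw_sym by blast
    moreover have "c \<noteq> u" using c btw_antisym assms by blast
    ultimately show "c \<in> {c\<in>V. btw u c w} - {u}" using c btw_sym by blast
  qed
  moreover have "u \<in> {c\<in>V. btw u c w}" using btw_refl assms by blast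
  ultimately have "{c\<in>V. btw b c w} \<subset> {c\<in>V. btw u c w}" by blast
  then show "card {c\<in>V. btw b c w} < card {c\<in>V. btw u c w}"
    using fin by (rule psubset_card_mono[rotated])
  have "{c\<in>V. btw u c b} \<subseteq> {c\<in>V. btw u c w} - {w}"
  proof
    fix c assume c: "c \<in> {c\<in>V. btw u c b}"
    then have "btw u c w" using btw_trans assms by blast
    moreover have "c \<noteq> w"
    proof
      assume "c = w"
      then have "btw b w u" "btw w b u" using c assms btw_sym by auto
      then show False using btw_antisym assms by blast
    qed
    ultimately show "c \<in> {c\<in>V. btw u c w} - {w}" using c by blast
  qed
  moreover have "w \<in> {c\<in>V. btw u c w}" using btw_refl btw_sym assms by blast
  ultimately have "{c\<in>V. btw u c b} \<subset> {c\<in>V. btw u c w}" by blast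
  then show "card {c\<in>V. btw u c b} < card {c\<in>V. btw u c w}"
    using fin by (rule psubset_card_mono[rotated])
qed

end

locale mtree = ptree V s0 par dep for V :: "'v set" and s0 par dep +
  fixes Miss :: "'v set"
  assumes Miss_sub: "Miss \<subseteq> V - {s0}"
    and Miss_nonadj: "\<And>a b. a \<in> Miss \<Longrightarrow> b \<in> Miss \<Longrightarrow> {a, b} \<notin> edges"
    and Miss_child: "\<And>c. c \<in> Miss \<Longrightarrow> \<exists>!y. y \<in> V - {s0} \<and> par y = c"
begin

definition parS where "parS a = (if par a \<in> Miss then par (par a) else par a)"
definition TS where "TS = (\<lambda>a. {a, parS a}) ` (V - Miss - {s0})"

lemma par_edge: "a \<in> V - {s0} \<Longrightarrow> {a, par a} \<in> edges"
  unfolding edges_def by blast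

lemma Miss_par: "c \<in> Miss \<Longrightarrow> par c \<notin> Miss \<and> par c \<in> V \<and> c \<in> V \<and> c \<noteq> s0"
  using Miss_nonadj par_edge Miss_sub par_in by blast

lemma Miss_ch: "c \<in> Miss \<Longrightarrow> y \<in> V - {s0} \<Longrightarrow> par y = c \<Longrightarrow> y \<notin> Miss"
  using Miss_nonadj par_edge by (metis insert_commute)

lemma s0_Ob: "s0 \<notin> Miss" using Miss_sub by blast

lemma parS_in: "a \<in> V - Miss - {s0} \<Longrightarrow> parS a \<in> V - Miss"
  unfolding parS_def using Miss_par par_in by auto

lemma parS_dep: "a \<in> V - Miss - {s0} \<Longrightarrow> dep (parS a) < dep a"
  unfolding parS_def using Miss_par dep_lt par_in
  by (auto intro: less_trans)

lemma ptreeS: "ptree (V - Miss) s0 parS dep"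
  by unfold_locales (use finV s0V s0_Ob parS_in parS_dep in auto)

lemma TS_eq: "TS = ptree.edges (V - Miss) s0 parS"
  unfolding TS_def ptree.edges_def[OF ptreeS] by (simp add: Diff_insert2 [symmetric] insert_commute)

lemma TS_tree: "is_tree (V - Miss) TS"
  unfolding TS_eq using ptree.ptree_is_tree[OF ptreeS] .

lemma between_exists_anc:
  assumes u: "u \<in> V - Miss" and w: "w \<in> V - Miss" and uw: "u \<noteq> w" and nT: "{u, w} \<notin> TS"
    and a: "anc u w"
  shows "\<exists>b\<in>V - Miss. btw u b w \<and> b \<noteq> u \<and> b \<noteq> w"
proof -
  have w': "w \<in> V" "w \<noteq> s0" "anc u (par w)" using anc_par_ne a uw by blast+
  have wOb: "w \<in> V - Miss - {s0}" using w w' by blast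
  show ?thesis
  proof (cases "par w \<in> Miss")
    case False
    then have pS: "parS w = par w" unfolding parS_def by simp
    have "par w \<noteq> u"
    proof
      assume "par w = u"
      then have "{u, w} = {w, parS w}" using pS by auto
      then show False using nT wOb unfolding TS_def by blast
    qed
    moreover have "btw u (par w) w"
      unfolding btw_def using anc_par[OF w'(1,2)] w'(3) anc_trans by blast
    moreover have "par w \<in> V - Miss" using False par_in w' by blast
    ultimately show ?thesis using par_ne w' by metis
  next
    case True
    let ?c = "par w"
    have pS: "parS w = par ?c" unfolding parS_def using True by simp
    have c: "par ?c \<notin> Miss" "par ?c \<in> V" "?c \<in> V" "?c \<noteq> s0" using Miss_par True by auto
    have "par ?c \<noteq> u"
    proof
      assume "par ?c = u"
      then have "{u, w} = {w, parS w}" using pS by auto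
      then show False using nT wOb unfolding TS_def by blast
    qed
    have "u \<noteq> ?c" using u True by blast
    then have uc: "anc u (par ?c)" using w'(3) anc_par_ne by blast
    have bt: "btw u (par ?c) w"
      unfolding btw_def using anc_par[OF c(3,4)] anc_par[OF w'(1,2)] uc anc_trans by blast
    have "par ?c \<noteq> w"
    proof
      assume "par ?c = w"
      then have "anc w ?c" using anc_par c by metis
      moreover have "anc ?c w" using anc_par w' by blast
      ultimately have "?c = w" using anc_antisym by blast
      then show False using True w by auto
    qed
    then show ?thesis using bt c \<open>par ?c \<noteq> u\<close> by blast
  qed
qed

lemma child_unique:
  assumes "c \<in> Miss" "y1 \<in> V - {s0}" "par y1 = c" "y2 \<in> V - {s0}" "par y2 = c"
  shows "y1 = y2"
proof -
  obtain y0 where "\<forall>y. y \<in> V - {s0} \<and> par y = c \<longrightarrow> y = y0"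
    using Miss_child[OF assms(1)] by blast
  then show ?thesis using assms by blast
qed

lemma between_exists:
  assumes u: "u \<in> V - Miss" and w: "w \<in> V - Miss" and uw: "u \<noteq> w" and nT: "{u, w} \<notin> TS"
  shows "\<exists>b\<in>V - Miss. btw u b w \<and> b \<noteq> u \<and> b \<noteq> w"
proof (cases "anc u w")
  case True show ?thesis using between_exists_anc[OF u w uw nT True] .
next
  case nuw: False
  show ?thesis
  proof (cases "anc w u")
    case True
    have nT': "{w, u} \<notin> TS" using nT by (simp add: insert_commute)
    obtain b where "b \<in> V - Miss" "btw w b u" "b \<noteq> w" "b \<noteq> u"
      using between_exists_anc[OF w u uw[symmetric] nT' True] by blast
    then show ?thesis using btw_sym by blast
  next
    case nwu: False
    have uV: "u \<in> V" using u by blast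
    have wV: "w \<in> V" using w by blast
    have bp: "u \<in> V - {s0} \<and> btw u (par u) w" using btw_par[OF anc_refl nuw wV uV] .
    have un: "u \<noteq> s0" using bp by blast
    have pu_w: "par u \<noteq> w"
    proof
      assume "par u = w"
      then have "anc w u" using anc_par[OF uV un] by simp
      with nwu show False by simp
    qed
    have pu_u: "par u \<noteq> u" using par_ne[OF uV un] .
    show ?thesis
    proof (cases "par u \<in> Miss")
      case False
      have "par u \<in> V - Miss" using False par_in[OF uV un] by simp
      then show ?thesis using bp pu_w pu_u by blast
    next
      case True
      let ?c = "par u"
      have c: "par ?c \<notin> Miss" "par ?c \<in> V" "?c \<in> V" "?c \<noteq> s0" using Miss_par[OF True] by auto
      have cu: "anc ?c u" using anc_par[OF uV un] .
      show ?thesis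
      proof (cases "anc ?c w")
        case False
        have bc: "btw u (par ?c) w" using btw_par[OF cu False wV uV] by blast
        have "par ?c \<noteq> u"
        proof
          assume "par ?c = u"
          then have "anc u ?c" using anc_par[OF c(3,4)] by simp
          then show False using anc_antisym[OF cu] pu_u by simp
        qed
        moreover have "par ?c \<noteq> w"
        proof
          assume "par ?c = w"
          then have "anc w ?c" using anc_par[OF c(3,4)] by simp
          then have "anc w u" using cu anc_trans by blast
          then show False using nwu by simp
        qed
        moreover have "par ?c \<in> V - Miss" using c by simp
        ultimately show ?thesis using bc by blast
      next
        case True
        have "w \<noteq> ?c" using w \<open>?c \<in> Miss\<close> by auto
        then obtain y where y: "y \<in> V" "y \<noteq> s0" "par y = ?c" "anc y w"
          using anc_child[OF True] by blast
        have "y = u" using child_unique[OF \<open>?c \<in> Miss\<close>, of y u] y uV un by simp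
        then show ?thesis using y nuw by simp
      qed
    qed
  qed
qed

lemma cut_edge:
  fixes f :: "'v \<Rightarrow> 'v \<Rightarrow> real"
  assumes fsym: "\<And>a b. f a b = f b a"
    and fmono: "\<And>u b w. u \<in> V \<Longrightarrow> b \<in> V \<Longrightarrow> w \<in> V \<Longrightarrow> btw u b w \<Longrightarrow> b \<noteq> w \<Longrightarrow> f u b < f u w"
  shows "u \<in> V - Miss \<Longrightarrow> w \<in> V - Miss \<Longrightarrow> u \<noteq> w \<Longrightarrow> u \<in> X \<Longrightarrow> w \<notin> X \<Longrightarrow>
    \<exists>y z. {y, z} \<in> TS \<and> y \<in> X \<and> z \<notin> X \<and> f y z \<le> f u w \<and> ({u, w} \<notin> TS \<longrightarrow> f y z < f u w)"
proof (induction "card {c\<in>V. btw u c w}" arbitrary: u w rule: less_induct)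
  case less
  show ?case
  proof (cases "{u, w} \<in> TS")
    case True
    then show ?thesis using less.prems by blast
  next
    case False
    then obtain b where b: "b \<in> V - Miss" "btw u b w" "b \<noteq> u" "b \<noteq> w"
      using between_exists less.prems by blast
    have uV: "u \<in> V" and wV: "w \<in> V" using less.prems by auto
    show ?thesis
    proof (cases "b \<in> X")
      case True
      have "card {c\<in>V. btw b c w} < card {c\<in>V. btw u c w}" using card_btw_less(1) b uV wV by blast
      from less.hyps[OF this b(1) less.prems(2) b(4) True less.prems(5)]
      obtain y z where yz: "{y, z} \<in> TS" "y \<in> X" "z \<notin> X" "f y z \<le> f b w"
        by blast
      have "btw w b u" using b btw_sym by blast
      then have "f w b < f w u" using fmono[of w b u] b uV wV by blast
      then have "f b w < f u w" using fsym[of w b] fsym[of w u] by simp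
      then show ?thesis using yz by (intro exI[of _ y] exI[of _ z]) auto
    next
      case False
      have "card {c\<in>V. btw u c b} < card {c\<in>V. btw u c w}" using card_btw_less(2) b uV wV by blast
      from less.hyps[OF this less.prems(1) b(1) b(3)[symmetric] less.prems(4) False]
      obtain y z where yz: "{y, z} \<in> TS" "y \<in> X" "z \<notin> X" "f y z \<le> f u b"
        by blast
      have "f u b < f u w" using fmono[of u b w] b uV wV by blast
      then show ?thesis using yz by (intro exI[of _ y] exI[of _ z]) auto
    qed
  qed
qed

end


context ptree
begin

lemma degree_edges:
  assumes c: "c \<in> V - {s0}"
  shows "degree edges c = Suc (card {y\<in>V - {s0}. par y = c})"
proof -
  have set: "{b. b \<noteq> c \<and> {c, b} \<in> edges} = insert (par c) {y\<in>V - {s0}. par y = c}"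
  proof (intro equalityI subsetI)
    fix b assume "b \<in> {b. b \<noteq> c \<and> {c, b} \<in> edges}"
    then obtain x where x: "x \<in> V - {s0}" "{c, b} = {x, par x}" "b \<noteq> c" unfolding edges_def by auto
    then show "b \<in> insert (par c) {y\<in>V - {s0}. par y = c}"
      by (auto simp: doubleton_eq_iff)
  next
    fix b assume b: "b \<in> insert (par c) {y\<in>V - {s0}. par y = c}"
    show "b \<in> {b. b \<noteq> c \<and> {c, b} \<in> edges}"
    proof (cases "b = par c")
      case True
      have "{c, par c} \<in> edges" unfolding edges_def using c by blast
      moreover have "par c \<noteq> c" using par_ne c by blast
      ultimately show ?thesis using True by simp
    next
      case False
      then have "b \<in> V - {s0}" "par b = c" using b by auto
      moreover have "b \<noteq> c" using par_ne \<open>b \<in> V - {s0}\<close> \<open>par b = c\<close> by blast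
      ultimately show ?thesis unfolding edges_def by (auto simp: insert_commute)
    qed
  qed
  have "par c \<notin> {y\<in>V - {s0}. par y = c}"
  proof
    assume "par c \<in> {y\<in>V - {s0}. par y = c}"
    then have "par (par c) = c" "par c \<in> V - {s0}" by auto
    then show False using dep_lt[of c] dep_lt[of "par c"] c by auto
  qed
  moreover have "finite {y\<in>V - {s0}. par y = c}" using finV by simp
  ultimately show ?thesis unfolding degree_def set by simp
qed

end

context mtree
begin

definition Ych where "Ych = {y\<in>V - {s0}. par y \<in> Miss}"

lemma card_Ych: "card Ych = card Miss"
proof -
  have "bij_betw par Ych Miss"
  proof (rule bij_betw_imageI)
    show "inj_on par Ych" unfolding Ych_def
      by (rule inj_onI) (use child_unique in blast)
    show "par ` Ych = Miss"
    proof (intro equalityI subsetI)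
      fix c assume "c \<in> Miss"
      then obtain y where "y \<in> V - {s0}" "par y = c" using Miss_child by blast
      then show "c \<in> par ` Ych" unfolding Ych_def using \<open>c \<in> Miss\<close> by blast
    qed (auto simp: Ych_def)
  qed
  then show ?thesis by (rule bij_betw_same_card)
qed

lemma Ych_Ob: "y \<in> Ych \<Longrightarrow> y \<in> V - Miss - {s0}"
  unfolding Ych_def using Miss_ch by blast

lemma card_TS_minus: "card (TS - edges) = card Miss"
proof -
  have eq: "TS - edges = (\<lambda>y. {y, par (par y)}) ` Ych"
  proof (intro equalityI subsetI)
    fix e assume e: "e \<in> TS - edges"
    then obtain a where a: "a \<in> V - Miss - {s0}" "e = {a, parS a}" unfolding TS_def by blast
    have "par a \<in> Miss"
    proof (rule ccontr)
      assume "par a \<notin> Miss"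
      then have "e = {a, par a}" using a unfolding parS_def by simp
      then show False using e a par_edge by blast
    qed
    then show "e \<in> (\<lambda>y. {y, par (par y)}) ` Ych" using a unfolding Ych_def parS_def by auto
  next
    fix e assume "e \<in> (\<lambda>y. {y, par (par y)}) ` Ych"
    then obtain y where y: "y \<in> Ych" "e = {y, par (par y)}" by blast
    have yO: "y \<in> V - Miss - {s0}" using Ych_Ob y by blast
    have py: "par y \<in> Miss" "par y \<in> V - {s0}" using y Miss_sub unfolding Ych_def by auto
    have "e \<in> TS" using y yO py unfolding TS_def parS_def by auto
    moreover have "e \<notin> edges"
    proof
      assume "e \<in> edges"
      then obtain x where x: "x \<in> V - {s0}" "{y, par (par y)} = {x, par x}" using y unfolding edges_def by blast
      then have "(x = y \<and> par x = par (par y)) \<or> (x = par (par y) \<and> par x = y)"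
        by (auto simp: doubleton_eq_iff)
      then show False
      proof
        assume "x = y \<and> par x = par (par y)"
        moreover have "par (par y) \<noteq> par y" using par_ne py by blast
        ultimately show False by auto
      next
        assume h: "x = par (par y) \<and> par x = y"
        have "dep (par y) < dep y" using dep_lt yO by blast
        moreover have "dep (par (par y)) < dep (par y)" using dep_lt py by blast
        moreover have "dep (par x) < dep x" using dep_lt x by blast
        then have "dep y < dep (par (par y))" using h by metis
        ultimately show False by linarith
      qed
    qed
    ultimately show "e \<in> TS - edges" by blast
  qed
  have inj: "inj_on (\<lambda>y. {y, par (par y)}) Ych"
  proof (rule inj_onI)
    fix y1 y2 assume y1: "y1 \<in> Ych" and y2: "y2 \<in> Ych" and e: "{y1, par (par y1)} = {y2, par (par y2)}"
    show "y1 = y2"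
    proof (rule ccontr)
      assume ne: "y1 \<noteq> y2"
      then have h: "y1 = par (par y2)" "y2 = par (par y1)" using e by (auto simp: doubleton_eq_iff)
      have d: "dep (par (par y)) < dep y" if "y \<in> Ych" for y
      proof -
        have h1: "y \<in> V - {s0}" "par y \<in> V - {s0}" using that Miss_sub unfolding Ych_def by auto
        have "dep (par y) < dep y" using h1(1) by (intro dep_lt) auto
        moreover have "dep (par (par y)) < dep (par y)" using h1(2) by (intro dep_lt) auto
        ultimately show ?thesis by linarith
      qed
      have "dep y2 < dep y1" using d[OF y1] h(2) by simp
      moreover have "dep y1 < dep y2" using d[OF y2] h(1) by simp
      ultimately show False by linarith
    qed
  qed
  show ?thesis unfolding eq card_image[OF inj] card_Ych ..
qed

lemma card_minus_TS: "card (edges - TS) = 2 * card Miss"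
proof -
  have eq: "edges - TS = (\<lambda>a. {a, par a}) ` (Miss \<union> Ych)"
  proof (intro equalityI subsetI)
    fix e assume e: "e \<in> edges - TS"
    then obtain a where a: "a \<in> V - {s0}" "e = {a, par a}" unfolding edges_def by blast
    have "a \<in> Miss \<or> par a \<in> Miss"
    proof (rule ccontr)
      assume "\<not> (a \<in> Miss \<or> par a \<in> Miss)"
      then have "e = {a, parS a}" "a \<in> V - Miss - {s0}" using a unfolding parS_def by auto
      then show False using e unfolding TS_def by blast
    qed
    then show "e \<in> (\<lambda>a. {a, par a}) ` (Miss \<union> Ych)" using a unfolding Ych_def by blast
  next
    fix e assume "e \<in> (\<lambda>a. {a, par a}) ` (Miss \<union> Ych)"
    then obtain a where a: "a \<in> Miss \<union> Ych" "e = {a, par a}" by blast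
    have aN: "a \<in> V - {s0}" using a Miss_sub unfolding Ych_def by blast
    have "e \<in> edges" using a aN par_edge by blast
    moreover have "e \<notin> TS"
    proof
      assume "e \<in> TS"
      then obtain b where b: "b \<in> V - Miss - {s0}" "e = {b, parS b}" unfolding TS_def by blast
      have "parS b \<notin> Miss" using parS_in b by blast
      moreover have "a \<in> Miss \<or> par a \<in> Miss" using a unfolding Ych_def by blast
      moreover have "a \<in> e" "par a \<in> e" using a by auto
      moreover have "z \<notin> Miss" if "z \<in> e" for z using that b \<open>parS b \<notin> Miss\<close> by auto
      ultimately show False by blast
    qed
    ultimately show "e \<in> edges - TS" by blast
  qed
  have sub: "Miss \<union> Ych \<subseteq> V - {s0}" using Miss_sub unfolding Ych_def by blast
  have disj: "Miss \<inter> Ych = {}" using Miss_par unfolding Ych_def by blast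
  have fin: "finite Miss" "finite Ych" using finV Miss_sub finite_subset unfolding Ych_def by auto
  show ?thesis unfolding eq card_image[OF inj_on_subset[OF edge_inj sub]]
    using card_Un_disjoint[OF fin disj] card_Ych by simp
qed

end


lemma tw_insert:
  assumes fin: "finite Ob" and ab: "a \<in> Ob" "b \<in> Ob" "a \<noteq> b" and nin: "{a, b} \<notin> T0"
  shows "tree_weight Ob (insert {a, b} T0) f = tree_weight Ob T0 f + (f a b + f b a) / 2"
proof -
  let ?P = "\<lambda>T. {(x, y). x \<in> Ob \<and> y \<in> Ob \<and> x \<noteq> y \<and> {x, y} \<in> T}"
  have eq: "?P (insert {a, b} T0) = ?P T0 \<union> {(a, b), (b, a)}"
    using ab by (auto simp: doubleton_eq_iff insert_commute)
  have disj: "?P T0 \<inter> {(a, b), (b, a)} = {}" using nin by (auto simp: insert_commute)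
  have finP: "finite (?P T0)"
    by (rule finite_subset[of _ "Ob \<times> Ob"]) (use fin in auto)
  have "(\<Sum>(x, y)\<in>?P (insert {a, b} T0). f x y) = (\<Sum>(x, y)\<in>?P T0. f x y) + (\<Sum>(x, y)\<in>{(a, b), (b, a)}. f x y)"
    unfolding eq by (rule sum.union_disjoint) (use finP disj in auto)
  also have "(\<Sum>(x, y)\<in>{(a, b), (b, a)}. f x y) = f a b + f b a" using ab by simp
  finally show ?thesis unfolding tree_weight_def by (simp add: add_divide_distrib)
qed

lemma phi_sym: "phi M v a b = phi M v b a"
  unfolding phi_def by (simp add: power2_commute)

context ptree
begin

lemma lcpf_form:
  assumes posr: "\<And>c. c \<in> V - {s0} \<Longrightarrow> r {c, par c} > 0"
    and posx: "\<And>c. c \<in> V - {s0} \<Longrightarrow> x {c, par c} > 0"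
  shows "lcpf_v V edges s0 r x v0 p q a =
    (\<lambda>\<omega>. (if a = s0 then v0 else 0) + (\<Sum>d\<in>V - {s0}. Amat r a d * p d \<omega> + Amat x a d * q d \<omega>))"
proof (rule ext)
  fix \<omega>
  show "lcpf_v V edges s0 r x v0 p q a \<omega> =
    (if a = s0 then v0 else 0) + (\<Sum>d\<in>V - {s0}. Amat r a d * p d \<omega> + Amat x a d * q d \<omega>)"
  proof (cases "a = s0")
    case True
    then show ?thesis unfolding lcpf_v_def using Amat_out[of s0] by simp
  next
    case False
    have e1: "red_inv (V - {s0}) (laplacian edges (\<lambda>e. 1 / r e)) = Amat r"
      by (rule red_inv_Amat) (rule posr)
    have e2: "red_inv (V - {s0}) (laplacian edges (\<lambda>e. 1 / x e)) = Amat x"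
      by (rule red_inv_Amat) (rule posx)
    show ?thesis unfolding lcpf_v_def e1 e2 using False by simp
  qed
qed

end

theorem corollary1:
  fixes V :: "'v set" and E :: "'v set set" and s0 :: 'v
    and r x :: "'v set \<Rightarrow> real" and v0 :: real
    and M :: "'w measure" and p q :: "'v \<Rightarrow> 'w \<Rightarrow> real"
    and Miss :: "'v set" and k :: nat and TM :: "'v set set"
  assumes tree: "is_tree V E"
    and s0: "s0 \<in> V" "degree E s0 = 1"
    and r_pos: "\<forall>e\<in>E. r e > 0" and x_pos: "\<forall>e\<in>E. x e > 0"
    and prob: "prob_space M"
    and p_meas: "\<forall>a\<in>V - {s0}. p a \<in> borel_measurable M"
    and q_meas: "\<forall>a\<in>V - {s0}. q a \<in> borel_measurable M"
    and p_L2: "\<forall>a\<in>V - {s0}. integrable M (\<lambda>\<omega>. (p a \<omega>)\<^sup>2)"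
    and q_L2: "\<forall>a\<in>V - {s0}. integrable M (\<lambda>\<omega>. (q a \<omega>)\<^sup>2)"
    and cov_p: "\<forall>a\<in>V - {s0}. \<forall>b\<in>V - {s0}. a \<noteq> b \<longrightarrow> cov M (p a) (p b) = 0"
    and cov_q: "\<forall>a\<in>V - {s0}. \<forall>b\<in>V - {s0}. a \<noteq> b \<longrightarrow> cov M (q a) (q b) = 0"
    and cov_qp: "\<forall>a\<in>V - {s0}. \<forall>b\<in>V - {s0}. a \<noteq> b \<longrightarrow> cov M (q a) (p b) = 0"
    and cov_qp_diag: "\<forall>a\<in>V - {s0}. cov M (q a) (p a) \<ge> 0"
    and var_pos: "\<forall>c\<in>V - {s0}. cov M (p c) (p c) + cov M (q c) (q c) > 0"
    and Miss_sub: "Miss \<subseteq> V - {s0}" and Miss_card: "card Miss = k"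
    and Miss_nonadj: "\<forall>a\<in>Miss. \<forall>b\<in>Miss. {a, b} \<notin> E"
    and Miss_deg: "\<forall>c\<in>Miss. degree E c = 2"
    and MST: "is_MST (V - Miss) (phi M (lcpf_v V E s0 r x v0 p q)) TM"
  shows "is_tree (V - Miss) TM \<and> card (V - Miss) = card V - k
         \<and> card (TM - E) = k \<and> card (E - TM) = 2 * k"
proof -
  obtain par dep where pt: "ptree V s0 par dep" and Eeq: "E = ptree.edges V s0 par"
    using tree_ptree[OF tree s0(1)] by blast
  interpret ptree V s0 par dep by (rule pt)
  have Ee: "E = edges" using Eeq .
  have edge_c: "{c, par c} \<in> E" if "c \<in> V - {s0}" for c unfolding Ee edges_def using that by blast
  have posr: "\<And>c. c \<in> V - {s0} \<Longrightarrow> r {c, par c} > 0" using r_pos edge_c by blast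
  have posx: "\<And>c. c \<in> V - {s0} \<Longrightarrow> x {c, par c} > 0" using x_pos edge_c by blast
  define v where "v = lcpf_v V E s0 r x v0 p q"
  have vform: "v a = (\<lambda>\<omega>. (if a = s0 then v0 else 0) + (\<Sum>d\<in>V - {s0}. Amat r a d * p d \<omega> + Amat x a d * q d \<omega>))" for a
    unfolding v_def Ee using lcpf_form[where r=r and x=x, OF posr posx] .
  have finN: "finite (V - {s0})" using finV by simp
  have L2p: "L2 M (p d)" if "d \<in> V - {s0}" for d unfolding L2_def using p_meas p_L2 that by blast
  have L2q: "L2 M (q d)" if "d \<in> V - {s0}" for d unfolding L2_def using q_meas q_L2 that by blast
  have phiF: "phi M v u w = (\<Sum>d\<in>V - {s0}. Fq (cov M (p d) (p d)) (cov M (q d) (q d)) (cov M (q d) (p d))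
      (Amat r u d - Amat r w d) (Amat x u d - Amat x w d))" for u w
    using phi_formula[OF prob finN L2p L2q cov_p cov_q cov_qp vform[of u] vform[of w]]
    unfolding cterm_def Fq_def .
  have covnn: "0 \<le> cov M f f" for f unfolding cov_def by (rule Bochner_Integration.integral_nonneg) simp
  have ABC: "0 \<le> cov M (p d) (p d) \<and> 0 \<le> cov M (q d) (q d) \<and> 0 \<le> cov M (q d) (p d)
      \<and> 0 < cov M (p d) (p d) + cov M (q d) (q d)" if "d \<in> V - {s0}" for d
    using covnn cov_qp_diag var_pos that by blast
  have fsym: "\<And>a b. phi M v a b = phi M v b a" by (rule phi_sym)
  have fmono: "phi M v u b < phi M v u w"
    if "u \<in> V" "b \<in> V" "w \<in> V" "btw u b w" "b \<noteq> w" for u b w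
    unfolding phiF by (rule sum_terms_strict[where r=r and x=x, OF posr posx ABC]) (use that in auto)
  have mchild: "\<exists>!y. y \<in> V - {s0} \<and> par y = c" if c: "c \<in> Miss" for c
  proof -
    have cN: "c \<in> V - {s0}" using c Miss_sub by blast
    have "degree E c = 2" using Miss_deg c by blast
    then have "degree edges c = 2" using Ee by simp
    then have "Suc (card {y\<in>V - {s0}. par y = c}) = 2" using degree_edges[OF cN] by simp
    then have "card {y\<in>V - {s0}. par y = c} = Suc 0" by simp
    then obtain y0 where y0: "{y\<in>V - {s0}. par y = c} = {y0}" by (auto simp: card_1_singleton_iff)
    have iff: "(y \<in> V - {s0} \<and> par y = c) \<longleftrightarrow> y = y0" for y
    proof -
      have "(y \<in> V - {s0} \<and> par y = c) \<longleftrightarrow> y \<in> {y\<in>V - {s0}. par y = c}" by simp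
      also have "\<dots> \<longleftrightarrow> y = y0" unfolding y0 by simp
      finally show ?thesis .
    qed
    show ?thesis
    proof (rule ex1I[of _ y0])
      show "y0 \<in> V - {s0} \<and> par y0 = c" using iff[of y0] by simp
      fix y assume "y \<in> V - {s0} \<and> par y = c"
      then show "y = y0" using iff[of y] by simp
    qed
  qed
  have nadj: "{a, b} \<notin> edges" if "a \<in> Miss" "b \<in> Miss" for a b
    using Miss_nonadj[unfolded Ee] that by blast
  interpret mtree V s0 par dep Miss
  proof unfold_locales
    show "Miss \<subseteq> V - {s0}" by (rule Miss_sub)
    show "\<And>a b. a \<in> Miss \<Longrightarrow> b \<in> Miss \<Longrightarrow> {a, b} \<notin> edges" by (rule nadj)
    show "\<And>c. c \<in> Miss \<Longrightarrow> \<exists>!y. y \<in> V - {s0} \<and> par y = c" by (rule mchild)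
  qed
  have TMtree: "is_tree (V - Miss) TM" and minw: "\<And>T'. is_tree (V - Miss) T' \<Longrightarrow>
      tree_weight (V - Miss) TM (phi M v) \<le> tree_weight (V - Miss) T' (phi M v)"
    using MST unfolding is_MST_def v_def by blast+
  have finOb: "finite (V - Miss)" using finV by simp
  have TMeq: "TM = TS"
  proof (rule ccontr)
    assume ne: "TM \<noteq> TS"
    have ugTM: "ugraph (V - Miss) TM" using TMtree unfolding is_tree_def by blast
    have finTM: "finite TM"
    proof -
      have "TM \<subseteq> Pow (V - Miss)" using ugTM unfolding ugraph_def by auto
      then show ?thesis using finOb by (meson finite_Pow_iff finite_subset)
    qed
    have cardTM: "card TM = card (V - Miss) - 1" using TMtree unfolding is_tree_def by blast
    have cardTS: "card TS = card (V - Miss) - 1" using TS_tree unfolding is_tree_def by blast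
    have finTS: "finite TS" unfolding TS_def using finV by simp
    obtain e where e: "e \<in> TM" "e \<notin> TS"
    proof (rule ccontr)
      assume "\<not> thesis"
      then have "TM \<subseteq> TS" using that by blast
      then have "TM = TS" using card_subset_eq[OF finTS, of TM] cardTM cardTS by simp
      then show False using ne by blast
    qed
    obtain u w where uw: "e = {u, w}" "u \<noteq> w" "u \<in> V - Miss" "w \<in> V - Miss"
      using ugTM e unfolding ugraph_def by blast
    obtain parT depT where ptT: "ptree (V - Miss) u parT depT" and TMe: "TM = ptree.edges (V - Miss) u parT"
      using tree_ptree[OF TMtree uw(3)] by blast
    interpret T: ptree "V - Miss" u parT depT by (rule ptT)
    have pw: "parT w = u"
    proof -
      obtain a where a: "a \<in> V - Miss - {u}" "{u, w} = {a, parT a}"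
        using e(1) uw(1) unfolding TMe T.edges_def by blast
      then show ?thesis by (auto simp: doubleton_eq_iff)
    qed
    define X where "X = {y. T.anc w y}"
    have wX: "w \<in> X" unfolding X_def by simp
    have uX: "u \<notin> X"
    proof
      assume "u \<in> X"
      then have "T.anc w u" unfolding X_def by simp
      then show False using T.anc_s0_eq uw(2) by blast
    qed
    have nTS: "{w, u} \<notin> TS" using e uw(1) by (simp add: insert_commute)
    obtain y z where yz: "{y, z} \<in> TS" "y \<in> X" "z \<notin> X" "phi M v y z < phi M v w u"
      using cut_edge[of "phi M v", OF fsym fmono uw(4) uw(3) uw(2)[symmetric] wX uX] nTS by blast
    have ugTS: "ugraph (V - Miss) TS" using TS_tree unfolding is_tree_def by blast
    have yzO: "y \<in> V - Miss" "z \<in> V - Miss" "y \<noteq> z"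
    proof -
      obtain a b where "{y, z} = {a, b}" "a \<noteq> b" "a \<in> V - Miss" "b \<in> V - Miss"
        using ugTS yz(1) unfolding ugraph_def by blast
      then show "y \<in> V - Miss" "z \<in> V - Miss" "y \<noteq> z" by (auto simp: doubleton_eq_iff)
    qed
    have nTM: "{y, z} \<notin> TM"
    proof
      assume "{y, z} \<in> TM"
      then obtain a where a: "a \<in> V - Miss - {u}" "{y, z} = {a, parT a}" unfolding TMe T.edges_def by blast
      then have "(a = y \<and> parT a = z) \<or> (a = z \<and> parT a = y)" by (auto simp: doubleton_eq_iff)
      then show False
      proof
        assume h: "a = y \<and> parT a = z"
        show False
        proof (cases "y = w")
          case True
          then have "{y, z} = e" using h pw uw(1) by auto
          then show False using yz(1) e(2) by simp
        next
          case False
          have "T.anc w y" using yz(2) unfolding X_def by simp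
          then have "T.anc w (parT y)" using T.anc_par_ne False by metis
          moreover have "parT y = z" using h by blast
          ultimately have "T.anc w z" by simp
          then show False using yz(3) unfolding X_def by simp
        qed
      next
        assume h: "a = z \<and> parT a = y"
        have "parT z = y" using h by blast
        moreover have "T.anc w y" using yz(2) unfolding X_def by simp
        ultimately have "T.anc w (parT z)" by simp
        then have "T.anc w z" using T.anc_step a h by blast
        then show False using yz(3) unfolding X_def by simp
      qed
    qed
    define TM' where "TM' = insert {y, z} (TM - {e})"
    let ?R = "\<lambda>a b. {a, b} \<in> TM'"
    have inTM': "{c, parT c} \<in> TM'" if "c \<in> V - Miss - {u}" "c \<noteq> w" for c
    proof -
      have "{c, parT c} \<in> TM" unfolding TMe T.edges_def using that by blast
      moreover have "{c, parT c} \<noteq> e" using that uw(1) by (auto simp: doubleton_eq_iff)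
      ultimately show ?thesis unfolding TM'_def by blast
    qed
    have toU: "?R\<^sup>*\<^sup>* a u" if "a \<in> V - Miss" "a \<notin> X" for a
    proof (rule T.anc_reach[OF T.anc_s0[OF that(1)]])
      fix c assume c: "T.anc u c" "T.anc c a" "c \<noteq> u"
      have "c \<in> V - Miss" using T.anc_in c(2) that(1) by blast
      moreover have "c \<noteq> w" using c(2) that(2) unfolding X_def by auto
      ultimately show "{c, parT c} \<in> TM'" using inTM' c(3) by blast
    qed
    have toW: "?R\<^sup>*\<^sup>* a w" if "a \<in> V - Miss" "a \<in> X" for a
    proof (rule T.anc_reach)
      show "T.anc w a" using that(2) unfolding X_def by simp
      fix c assume c: "T.anc w c" "T.anc c a" "c \<noteq> w"
      have "c \<in> V - Miss" using T.anc_in c(2) that(1) by blast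
      moreover have "c \<noteq> u" using c(1) uX unfolding X_def by auto
      ultimately show "{c, parT c} \<in> TM'" using inTM' c(3) by blast
    qed
    have toU_all: "?R\<^sup>*\<^sup>* a u" if "a \<in> V - Miss" for a
    proof (cases "a \<in> X")
      case False then show ?thesis using toU that by blast
    next
      case True
      have aw: "?R\<^sup>*\<^sup>* a w" using toW that True by blast
      have wy: "?R\<^sup>*\<^sup>* w y" using rtranclp_sym_set[OF toW[OF yzO(1) yz(2)]] .
      have yz1: "?R y z" unfolding TM'_def by simp
      have zu: "?R\<^sup>*\<^sup>* z u" using toU yzO(2) yz(3) by blast
      have "?R\<^sup>*\<^sup>* a y" by (rule rtranclp_trans[OF aw wy])
      then have "?R\<^sup>*\<^sup>* a z" using yz1 by (rule rtranclp.rtrancl_into_rtrancl)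
      then show ?thesis using zu by (rule rtranclp_trans)
    qed
    have treeTM': "is_tree (V - Miss) TM'"
      unfolding is_tree_def
    proof (intro conjI)
      show "finite (V - Miss)" by (rule finOb)
      show "V - Miss \<noteq> {}" using uw by blast
      show "ugraph (V - Miss) TM'" unfolding ugraph_def
      proof
        fix e' assume "e' \<in> TM'"
        then have "e' = {y, z} \<or> e' \<in> TM" unfolding TM'_def by blast
        then show "\<exists>a b. e' = {a, b} \<and> a \<noteq> b \<and> a \<in> V - Miss \<and> b \<in> V - Miss"
        proof
          assume "e' = {y, z}" then show ?thesis using yzO by blast
        next
          assume "e' \<in> TM" then show ?thesis using ugTM unfolding ugraph_def by blast
        qed
      qed
      show "gconnected (V - Miss) TM'" unfolding gconnected_def
      proof (intro ballI)
        fix a b assume a: "a \<in> V - Miss" and b: "b \<in> V - Miss"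
        have "?R\<^sup>*\<^sup>* a u" by (rule toU_all[OF a])
        moreover have "?R\<^sup>*\<^sup>* u b" by (rule rtranclp_sym_set[OF toU_all[OF b]])
        ultimately show "?R\<^sup>*\<^sup>* a b" by (rule rtranclp_trans)
      qed
      have "card TM' = Suc (card (TM - {e}))" unfolding TM'_def using nTM finTM by simp
      also have "\<dots> = card TM" using card_Suc_Diff1[OF finTM e(1)] .
      finally show "card TM' = card (V - Miss) - 1" using cardTM by simp
    qed
    have w1: "tree_weight (V - Miss) TM (phi M v) = tree_weight (V - Miss) (TM - {e}) (phi M v) + (phi M v u w + phi M v w u) / 2"
    proof -
      have "TM = insert {u, w} (TM - {e})" using e(1) uw(1) by blast
      then show ?thesis using tw_insert[OF finOb uw(3) uw(4) uw(2), of "TM - {e}"] uw(1) by simp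
    qed
    have w2: "tree_weight (V - Miss) TM' (phi M v) = tree_weight (V - Miss) (TM - {e}) (phi M v) + (phi M v y z + phi M v z y) / 2"
      unfolding TM'_def using tw_insert[OF finOb yzO, of "TM - {e}"] nTM by simp
    have "phi M v y z + phi M v z y < phi M v u w + phi M v w u"
      using yz(4) fsym[of z y] fsym[of u w] by simp
    then have "tree_weight (V - Miss) TM' (phi M v) < tree_weight (V - Miss) TM (phi M v)"
      using w1 w2 by simp
    then show False using minw[OF treeTM'] by simp
  qed
  have finMiss: "finite Miss" using Miss_sub finV finite_subset by blast
  show ?thesis
  proof (intro conjI)
    show "is_tree (V - Miss) TM" by (rule TMtree)
    show "card (V - Miss) = card V - k" using card_Diff_subset[OF finMiss] Miss_sub Miss_card by blast
    show "card (TM - E) = k" using card_TS_minus TMeq Ee Miss_card by simp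
    show "card (E - TM) = 2 * k" using card_minus_TS TMeq Ee Miss_card by simp
  qed
qed


end
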